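(* Let $V_1,\dots,V_{15}$ be the orbits of $L$ on $V(G_{E_8})$. For each $i$, choose a vector $w_i\in\Psi_{E_8}$ with $v_{w_i}\in V_i$. For $x\in\Psi_{E_8}$ let $P_x=\frac{1}{\|x\|^2}xx^*\in M_8(\mathbb{C})$ be the rank-one projection onto $\mathbb{C}x$. For $v_y,v_z\in V_i$ choose $M_{yz}=M_1\otimes M_2\otimes M_3$ with $M_k\in\{I,X,Y,Z\}$ such that $M_{yz}y=\pm z$ (which exists since $v_y,v_z$ lie in the same $L$-orbit), and set $u^{(i)}_{v_yv_z}:=M_{yz}P_{w_i}M_{yz}^*=P_{M_{yz}w_i}$. Let $u$ be the $120\times120$ matrix with entries in $M_8(\mathbb{C})$ that is block diagonal with respect to the partition $V_1,\dots,V_{15}$, with diagonal blocks $u^{(i)}=(u^{(i)}_{v_yv_z})_{v_y,v_z\in V_i}$ and all other entries $0$. Then $u$ is a quantum permutation matrix.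
   Context: The $E_8$ root system $\Psi_{E_8}\subset\mathbb{R}^8$ consists of the 240 vectors $\pm e_i\pm e_j$ ($1\le i<j\le 8$) and all $x\in\{\pm1\}^8$ with $\prod_i x_i=1$. $G_{E_8}$ is the graph with vertices $v_x$, $x\in\Psi_{E_8}$, where $v_x=v_{-x}$, and $v_x\sim v_y$ iff $\langle x,y\rangle=0$. Let $I=\mathrm{diag}(1,1)$, $X=\begin{pmatrix}0&1\\1&0\end{pmatrix}$, $Z=\mathrm{diag}(1,-1)$, $Y=XZ$. For $M=M_1\otimes M_2\otimes M_3$ with $M_i\in\{I,X,Y,Z\}$, $\sigma_M:v_x\mapsto v_{Mx}$ is an automorphism of $G_{E_8}$ and $L=\{\sigma_M\}\cong\mathbb{Z}_2^6$; $L$ has 15 orbits on $V(G_{E_8})$, each of size 8. A quantum permutation matrix (magic unitary) over a unital $C^*$-algebra $\mathcal{A}$ is a matrix $u=(u_{ij})\in M_n(\mathcal{A})$ whose entries are projections ($u_{ij}=u_{ij}^*=u_{ij}^2$) with $\sum_k u_{ik}=1_{\mathcal{A}}=\sum_k u_{ki}$ for all $i$. Here $\mathcal{A}=M_8(\mathbb{C})$. *)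

theory Defs
  imports "HOL-Analysis.Analysis"
begin

text \<open>Coordinates of R^8 are indexed by the type 8; the element with
representative k (0 \<le> k < 8) is the basis direction e_(k+1).
In the Kronecker product M1 (x) M2 (x) M3 the index k corresponds to
the binary digits (k div 4, (k div 2) mod 2, k mod 2).\<close>

definition idx8 :: "8 \<Rightarrow> int" where "idx8 i = Rep_bit0 i"

definition dig1 :: "8 \<Rightarrow> 2" where "dig1 i = of_int (idx8 i div 4)"
definition dig2 :: "8 \<Rightarrow> 2" where "dig2 i = of_int ((idx8 i div 2) mod 2)"
definition dig3 :: "8 \<Rightarrow> 2" where "dig3 i = of_int (idx8 i mod 2)"

definition kron3 :: "real^2^2 \<Rightarrow> real^2^2 \<Rightarrow> real^2^2 \<Rightarrow> real^8^8" where
  "kron3 A B C = (\<chi> i j. A $ dig1 i $ dig1 j * B $ dig2 i $ dig2 j * C $ dig3 i $ dig3 j)"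

definition PauliI :: "real^2^2" where "PauliI = mat 1"
definition PauliX :: "real^2^2" where "PauliX = (\<chi> i j. if i = j then 0 else 1)"
definition PauliZ :: "real^2^2" where "PauliZ = (\<chi> i j. if i = j then (if i = 0 then 1 else -1) else 0)"
definition PauliY :: "real^2^2" where "PauliY = PauliX ** PauliZ"

definition Pauli3 :: "(real^8^8) set" where
  "Pauli3 = {kron3 A B C | A B C. A \<in> {PauliI, PauliX, PauliY, PauliZ}
                              \<and> B \<in> {PauliI, PauliX, PauliY, PauliZ}
                              \<and> C \<in> {PauliI, PauliX, PauliY, PauliZ}}"

definition E8_roots :: "(real^8) set" where
  "E8_roots =
     {x. \<exists>i j s t. i \<noteq> j \<and> s \<in> {1, -1} \<and> t \<in> {1, -1} \<and> x = s *\<^sub>R axis i 1 + t *\<^sub>R axis j 1}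
   \<union> {x. (\<forall>i. x $ i \<in> {1, -1}) \<and> (\<Prod>i\<in>UNIV. x $ i) = 1}"

text \<open>Vertices of G_E8: v_x = v_(-x), represented as the pair {x, -x}.\<close>
definition vert :: "real^8 \<Rightarrow> (real^8) set" where "vert x = {x, -x}"

definition E8_vertices :: "(real^8) set set" where "E8_vertices = vert ` E8_roots"

definition sigma :: "real^8^8 \<Rightarrow> (real^8) set \<Rightarrow> (real^8) set" where
  "sigma M v = (\<lambda>x. M *v x) ` v"

definition L_orbit :: "(real^8) set \<Rightarrow> (real^8) set set" where
  "L_orbit v = {sigma M v | M. M \<in> Pauli3}"

definition L_orbits :: "(real^8) set set set" where
  "L_orbits = L_orbit ` E8_vertices"

definition projC :: "real^8 \<Rightarrow> complex^8^8" where
  "projC x = (\<chi> i j. complex_of_real (x $ i * x $ j / (norm x)^2))"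

definition adjointC :: "complex^'n^'n \<Rightarrow> complex^'n^'n" where
  "adjointC A = (\<chi> i j. cnj (A $ j $ i))"

definition is_projection :: "complex^'n^'n \<Rightarrow> bool" where
  "is_projection p \<longleftrightarrow> adjointC p = p \<and> p ** p = p"

definition quantum_permutation_matrix ::
    "'v set \<Rightarrow> ('v \<Rightarrow> 'v \<Rightarrow> complex^'n^'n) \<Rightarrow> bool" where
  "quantum_permutation_matrix V u \<longleftrightarrow>
     (\<forall>i\<in>V. \<forall>j\<in>V. is_projection (u i j)) \<and>
     (\<forall>i\<in>V. (\<Sum>k\<in>V. u i k) = mat 1) \<and>
     (\<forall>i\<in>V. (\<Sum>k\<in>V. u k i) = mat 1)"

end

theory Submission
  imports Defs
begin


definition idx :: "8 \<Rightarrow> nat" where "idx i = nat (Rep_bit0 i)"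
definition ix :: "nat \<Rightarrow> 8" where "ix k = of_nat k"

lemma Rep8_nonneg: "0 \<le> Rep_bit0 (i::8)" using Rep_bit0[of i] by simp
lemma Rep8_lt: "Rep_bit0 (i::8) < 8" using Rep_bit0[of i] by simp

lemma idx_lt: "idx i < 8"
  using Rep8_lt[of i] Rep8_nonneg[of i] unfolding idx_def by simp

lemma ix_idx[simp]: "ix (idx i) = i"
  unfolding ix_def idx_def bit0.of_nat_eq
  using Rep8_lt[of i] Rep8_nonneg[of i] by (simp add: Rep_bit0_inverse)

lemma idx_ix[simp]: "k < 8 \<Longrightarrow> idx (ix k) = k"
  unfolding ix_def idx_def bit0.of_nat_eq
  by (simp add: Abs_bit0_inverse)

lemma UNIV8: "(UNIV::8 set) = ix ` {..<8}"
  using idx_lt ix_idx by (metis UNIV_eq_I image_eqI lessThan_iff)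

lemma inj_ix: "inj_on ix {..<8}"
  by (metis idx_ix inj_onI lessThan_iff)

lemma sum_UNIV8: "sum f (UNIV::8 set) = (\<Sum>k<8. f (ix k))"
  unfolding UNIV8 by (simp add: sum.reindex[OF inj_ix])

lemma prod_UNIV8: "prod f (UNIV::8 set) = (\<Prod>k<8. f (ix k))"
  unfolding UNIV8 by (simp add: prod.reindex[OF inj_ix])

lemma all8: "(\<forall>i::8. P i) \<longleftrightarrow> (\<forall>k<8. P (ix k))"
  by (metis idx_lt ix_idx)

lemma ix_inj: "k < 8 \<Longrightarrow> l < 8 \<Longrightarrow> ix k = ix l \<longleftrightarrow> k = l"
  by (metis idx_ix)

lemma idx8_ix: "k < 8 \<Longrightarrow> idx8 (ix k) = int k"
  unfolding idx8_def ix_def bit0.of_nat_eq by (simp add: Abs_bit0_inverse)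

lemma dig1_ix: "k < 8 \<Longrightarrow> dig1 (ix k) = of_int (int k div 4)"
  by (simp add: dig1_def idx8_ix)
lemma dig2_ix: "k < 8 \<Longrightarrow> dig2 (ix k) = of_int ((int k div 2) mod 2)"
  by (simp add: dig2_def idx8_ix)
lemma dig3_ix: "k < 8 \<Longrightarrow> dig3 (ix k) = of_int (int k mod 2)"
  by (simp add: dig3_def idx8_ix)

lemma lt8: "{..<8::nat} = {0,1,2,3,4,5,6,7}" by auto

lemma two_eq_0_2: "(2::2) = 0" by simp

lemma sum8_dig: "(\<Sum>k\<in>(UNIV::8 set). F (dig1 k) (dig2 k) (dig3 k)) =
   (\<Sum>a\<in>(UNIV::2 set). \<Sum>b\<in>(UNIV::2 set). \<Sum>c\<in>(UNIV::2 set). F a b c)"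
  unfolding sum_UNIV8 sum_2
  unfolding lt8 two_eq_0_2
  by (simp add: dig1_ix dig2_ix dig3_ix ac_simps)


lemma UNIV2': "(UNIV::2 set) = {0,1}"
  using UNIV_2 two_eq_0_2 by auto

lemma sum2': "sum f (UNIV::2 set) = f 0 + f 1"
  unfolding UNIV2' by simp

lemma two_cases: "(i::2) = 0 \<or> i = 1"
  using UNIV2' by auto

lemma all2: "(\<forall>i::2. P i) \<longleftrightarrow> P 0 \<and> P 1"
proof
  assume a: "P 0 \<and> P 1"
  show "\<forall>i. P i"
  proof
    fix i show "P i" using two_cases[of i] a by auto
  qed
qed simp

lemma eq22: "(A::real^2^2) = B \<longleftrightarrow> A$0$0 = B$0$0 \<and> A$0$1 = B$0$1 \<and> A$1$0 = B$1$0 \<and> A$1$1 = B$1$1"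
  by (simp add: vec_eq_iff all2)

lemma sum3_prod: "(\<Sum>a\<in>A. f a) * (\<Sum>b\<in>B. g b) * (\<Sum>c\<in>C. h c) = (\<Sum>a\<in>A. \<Sum>b\<in>B. \<Sum>c\<in>C. f a * g b * (h c::real))"
proof -
  have "(\<Sum>a\<in>A. f a) * (\<Sum>b\<in>B. g b) * (\<Sum>c\<in>C. h c) = (\<Sum>a\<in>A. \<Sum>b\<in>B. f a * g b) * (\<Sum>c\<in>C. h c)"
    by (simp only: sum_product)
  also have "\<dots> = (\<Sum>a\<in>A. (\<Sum>b\<in>B. f a * g b) * (\<Sum>c\<in>C. h c))"
    by (rule sum_distrib_right)
  also have "\<dots> = (\<Sum>a\<in>A. \<Sum>b\<in>B. f a * g b * (\<Sum>c\<in>C. h c))"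
    by (rule sum.cong[OF refl], rule sum_distrib_right)
  also have "\<dots> = (\<Sum>a\<in>A. \<Sum>b\<in>B. \<Sum>c\<in>C. f a * g b * h c)"
    by (simp only: sum_distrib_left)
  finally show ?thesis .
qed

lemma kron3_mult: "kron3 A B C ** kron3 A' B' C' = kron3 (A ** A') (B ** B') (C ** C')"
proof -
  have "(\<Sum>k\<in>UNIV. A $ dig1 i $ dig1 k * B $ dig2 i $ dig2 k * C $ dig3 i $ dig3 k *
           (A' $ dig1 k $ dig1 j * B' $ dig2 k $ dig2 j * C' $ dig3 k $ dig3 j)) =
        (\<Sum>a\<in>UNIV. A $ dig1 i $ a * A' $ a $ dig1 j) * (\<Sum>b\<in>UNIV. B $ dig2 i $ b * B' $ b $ dig2 j) *
        (\<Sum>c\<in>UNIV. C $ dig3 i $ c * C' $ c $ dig3 j)" for i j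
  proof -
    have "(\<Sum>k\<in>UNIV. A $ dig1 i $ dig1 k * B $ dig2 i $ dig2 k * C $ dig3 i $ dig3 k *
           (A' $ dig1 k $ dig1 j * B' $ dig2 k $ dig2 j * C' $ dig3 k $ dig3 j)) =
          (\<Sum>k\<in>UNIV. (A $ dig1 i $ dig1 k * A' $ dig1 k $ dig1 j) * (B $ dig2 i $ dig2 k * B' $ dig2 k $ dig2 j)
             * (C $ dig3 i $ dig3 k * C' $ dig3 k $ dig3 j))"
      by (simp add: ac_simps)
    also have "\<dots> = (\<Sum>a\<in>UNIV. \<Sum>b\<in>UNIV. \<Sum>c\<in>UNIV. (A $ dig1 i $ a * A' $ a $ dig1 j) * (B $ dig2 i $ b * B' $ b $ dig2 j)
             * (C $ dig3 i $ c * C' $ c $ dig3 j))"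
      by (rule sum8_dig)
    also have "\<dots> = (\<Sum>a\<in>UNIV. A $ dig1 i $ a * A' $ a $ dig1 j) * (\<Sum>b\<in>UNIV. B $ dig2 i $ b * B' $ b $ dig2 j) *
        (\<Sum>c\<in>UNIV. C $ dig3 i $ c * C' $ c $ dig3 j)"
      by (rule sum3_prod[symmetric])
    finally show ?thesis .
  qed
  then show ?thesis
    by (simp add: vec_eq_iff kron3_def matrix_matrix_mult_def)
qed

lemma kron3_transpose: "transpose (kron3 A B C) = kron3 (transpose A) (transpose B) (transpose C)"
  by (simp add: vec_eq_iff kron3_def transpose_def)

lemma kron3_scale: "kron3 (a *\<^sub>R A) (b *\<^sub>R B) (c *\<^sub>R C) = (a*b*c) *\<^sub>R kron3 A B C"
  by (simp add: vec_eq_iff kron3_def ac_simps)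

definition idx2 :: "2 \<Rightarrow> nat" where "idx2 i = nat (Rep_bit0 i)"

lemma idx2_of_int: "idx2 (of_int z) = nat (z mod 2)"
  unfolding idx2_def bit0.of_int_eq by (simp add: Abs_bit0_inverse)

lemma idx2_0[simp]: "idx2 0 = 0" and idx2_1[simp]: "idx2 1 = 1"
  using idx2_of_int[of 0] idx2_of_int[of 1] by simp_all

lemma lt8_cases: "(p::nat) < 8 \<Longrightarrow> p = 0 \<or> p = 1 \<or> p = 2 \<or> p = 3 \<or> p = 4 \<or> p = 5 \<or> p = 6 \<or> p = 7"
  by auto

lemma idx2_dig: assumes "p < 8"
  shows "idx2 (dig1 (ix p)) = p div 4" "idx2 (dig2 (ix p)) = p div 2 mod 2" "idx2 (dig3 (ix p)) = p mod 2"
proof -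
  have "nat ((int p div 4) mod 2) = p div 4"
    using assms by (simp add: zdiv_int[symmetric] zmod_int[symmetric])
  moreover have "nat ((int p div 2 mod 2) mod 2) = p div 2 mod 2" "nat ((int p mod 2) mod 2) = p mod 2"
    by (simp_all add: nat_mod_distrib nat_div_distrib)
  ultimately
  show "idx2 (dig1 (ix p)) = p div 4" "idx2 (dig2 (ix p)) = p div 2 mod 2" "idx2 (dig3 (ix p)) = p mod 2"
    by (simp_all only: dig1_ix[OF assms] dig2_ix[OF assms] dig3_ix[OF assms] idx2_of_int)
qed

lemma bits3: "(p::nat) = 4*(p div 4) + 2*(p div 2 mod 2) + p mod 2"
proof -
  have 1: "p = 2*(p div 2) + p mod 2" by simp
  have 2: "p div 2 = 2*(p div 2 div 2) + p div 2 mod 2" by simp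
  have 3: "p div 2 div 2 = p div 4" by (simp add: div_mult2_eq)
  show ?thesis using 1 2 3 by linarith
qed

lemma dig_inj: "dig1 i = dig1 j \<Longrightarrow> dig2 i = dig2 j \<Longrightarrow> dig3 i = dig3 j \<Longrightarrow> i = j"
proof -
  assume a: "dig1 i = dig1 j" "dig2 i = dig2 j" "dig3 i = dig3 j"
  define p where "p = idx i"
  define q where "q = idx j"
  have pq: "i = ix p" "j = ix q" "p < 8" "q < 8" by (simp_all add: p_def q_def idx_lt)
  have 1: "idx2 (dig1 i) = p div 4" "idx2 (dig2 i) = p div 2 mod 2" "idx2 (dig3 i) = p mod 2"
    using idx2_dig[OF pq(3)] pq(1) by simp_all
  have 2: "idx2 (dig1 j) = q div 4" "idx2 (dig2 j) = q div 2 mod 2" "idx2 (dig3 j) = q mod 2"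
    using idx2_dig[OF pq(4)] pq(2) by simp_all
  have "p div 4 = q div 4" "p div 2 mod 2 = q div 2 mod 2" "p mod 2 = q mod 2"
    using 1 2 a by simp_all
  then have "p = q" using bits3[of p] bits3[of q] by linarith
  then show "i = j" using pq by simp
qed

lemma kron3_id: "kron3 (mat 1) (mat 1) (mat 1) = mat 1"
  by (auto simp: vec_eq_iff kron3_def mat_def dest: dig_inj)

definition P2 :: "(real^2^2) set" where "P2 = {PauliI, PauliX, PauliY, PauliZ}"

lemma P2_facts:
  "\<forall>P\<in>P2. \<forall>Q\<in>P2. P ** Q \<in> P2 \<or> (-1::real) *\<^sub>R (P ** Q) \<in> P2"
  "\<forall>P\<in>P2. \<forall>Q\<in>P2. \<exists>e\<in>{1,-1::real}. P ** Q = e *\<^sub>R (Q ** P)"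
  "\<forall>P\<in>P2. \<exists>e\<in>{1,-1::real}. transpose P = e *\<^sub>R P"
  "\<forall>P\<in>P2. transpose P ** P = mat 1"
  "\<forall>P\<in>P2. P ** transpose P = mat 1"
  unfolding P2_def PauliY_def
  by (simp_all add: eq22 matrix_matrix_mult_def sum2' PauliI_def PauliX_def PauliZ_def mat_def transpose_def)


lemma P2_mult: "P \<in> P2 \<Longrightarrow> Q \<in> P2 \<Longrightarrow> \<exists>R\<in>P2. \<exists>e\<in>{1,-1::real}. P ** Q = e *\<^sub>R R"
proof -
  assume "P \<in> P2" "Q \<in> P2"
  then have "P ** Q \<in> P2 \<or> (-1::real) *\<^sub>R (P ** Q) \<in> P2" using P2_facts(1) by blast
  then show ?thesis
  proof
    assume "P ** Q \<in> P2" then show ?thesis by (intro bexI[of _ "P ** Q"] bexI[of _ 1]) auto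
  next
    assume "(-1::real) *\<^sub>R (P ** Q) \<in> P2" then show ?thesis
      by (intro bexI[of _ "(-1::real) *\<^sub>R (P ** Q)"] bexI[of _ "-1"]) auto
  qed
qed

lemma Pauli3_alt: "Pauli3 = {kron3 A B C | A B C. A \<in> P2 \<and> B \<in> P2 \<and> C \<in> P2}"
  by (simp add: Pauli3_def P2_def)

lemma sign3: "(a::real) \<in> {1,-1} \<Longrightarrow> b \<in> {1,-1} \<Longrightarrow> c \<in> {1,-1} \<Longrightarrow> a*b*c \<in> {1,-1}"
  by auto

lemma PP_mult: "M \<in> Pauli3 \<Longrightarrow> N \<in> Pauli3 \<Longrightarrow> \<exists>K\<in>Pauli3. \<exists>e\<in>{1,-1::real}. M ** N = e *\<^sub>R K"
proof -
  assume "M \<in> Pauli3" "N \<in> Pauli3"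
  then obtain A B C A' B' C' where M: "M = kron3 A B C" and N: "N = kron3 A' B' C'"
    and P: "A \<in> P2" "B \<in> P2" "C \<in> P2" "A' \<in> P2" "B' \<in> P2" "C' \<in> P2"
    unfolding Pauli3_alt by blast
  obtain R1 e1 where 1: "R1 \<in> P2" "e1 \<in> {1,-1::real}" "A ** A' = e1 *\<^sub>R R1" using P2_mult P by blast
  obtain R2 e2 where 2: "R2 \<in> P2" "e2 \<in> {1,-1::real}" "B ** B' = e2 *\<^sub>R R2" using P2_mult P by blast
  obtain R3 e3 where 3: "R3 \<in> P2" "e3 \<in> {1,-1::real}" "C ** C' = e3 *\<^sub>R R3" using P2_mult P by blast
  have "M ** N = (e1*e2*e3) *\<^sub>R kron3 R1 R2 R3"
    unfolding M N kron3_mult 1 2 3 kron3_scale ..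
  moreover have "kron3 R1 R2 R3 \<in> Pauli3" unfolding Pauli3_alt using 1 2 3 by blast
  ultimately show ?thesis using sign3[OF 1(2) 2(2) 3(2)] by blast
qed

lemma PP_comm: "M \<in> Pauli3 \<Longrightarrow> N \<in> Pauli3 \<Longrightarrow> \<exists>e\<in>{1,-1::real}. M ** N = e *\<^sub>R (N ** M)"
proof -
  assume "M \<in> Pauli3" "N \<in> Pauli3"
  then obtain A B C A' B' C' where M: "M = kron3 A B C" and N: "N = kron3 A' B' C'"
    and P: "A \<in> P2" "B \<in> P2" "C \<in> P2" "A' \<in> P2" "B' \<in> P2" "C' \<in> P2"
    unfolding Pauli3_alt by blast
  obtain e1 where 1: "e1 \<in> {1,-1::real}" "A ** A' = e1 *\<^sub>R (A' ** A)" using P2_facts(2) P by blast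
  obtain e2 where 2: "e2 \<in> {1,-1::real}" "B ** B' = e2 *\<^sub>R (B' ** B)" using P2_facts(2) P by blast
  obtain e3 where 3: "e3 \<in> {1,-1::real}" "C ** C' = e3 *\<^sub>R (C' ** C)" using P2_facts(2) P by blast
  have "M ** N = (e1*e2*e3) *\<^sub>R (N ** M)"
    unfolding M N kron3_mult 1 2 3 kron3_scale ..
  then show ?thesis using sign3[OF 1(1) 2(1) 3(1)] by blast
qed

lemma PP_trans: "M \<in> Pauli3 \<Longrightarrow> \<exists>e\<in>{1,-1::real}. transpose M = e *\<^sub>R M"
proof -
  assume "M \<in> Pauli3"
  then obtain A B C where M: "M = kron3 A B C" and P: "A \<in> P2" "B \<in> P2" "C \<in> P2"
    unfolding Pauli3_alt by blast
  obtain e1 where 1: "e1 \<in> {1,-1::real}" "transpose A = e1 *\<^sub>R A" using P2_facts(3) P by blast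
  obtain e2 where 2: "e2 \<in> {1,-1::real}" "transpose B = e2 *\<^sub>R B" using P2_facts(3) P by blast
  obtain e3 where 3: "e3 \<in> {1,-1::real}" "transpose C = e3 *\<^sub>R C" using P2_facts(3) P by blast
  have "transpose M = (e1*e2*e3) *\<^sub>R M"
    unfolding M kron3_transpose 1 2 3 kron3_scale ..
  then show ?thesis using sign3[OF 1(1) 2(1) 3(1)] by blast
qed

lemma PP_orth: "M \<in> Pauli3 \<Longrightarrow> transpose M ** M = mat 1 \<and> M ** transpose M = mat 1"
proof -
  assume "M \<in> Pauli3"
  then obtain A B C where M: "M = kron3 A B C" and P: "A \<in> P2" "B \<in> P2" "C \<in> P2"
    unfolding Pauli3_alt by blast
  show ?thesis unfolding M kron3_transpose kron3_mult
    using P P2_facts(4,5) kron3_id by simp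
qed

lemma PP_id: "mat 1 \<in> Pauli3"
proof -
  have "kron3 PauliI PauliI PauliI \<in> Pauli3" unfolding Pauli3_def by blast
  then show ?thesis using kron3_id by (simp add: PauliI_def)
qed

lemma finite_PP: "finite Pauli3"
proof -
  have "Pauli3 = (\<lambda>(A,B,C). kron3 A B C) ` (P2 \<times> P2 \<times> P2)"
    unfolding Pauli3_alt by (auto intro!: image_eqI[where x="(A,B,C)" for A B C])
  moreover have "finite (P2 \<times> P2 \<times> P2)" by (simp add: P2_def)
  ultimately show ?thesis by (metis finite_imageI)
qed




definition vecI :: "int list \<Rightarrow> real^8" where "vecI r = (\<chi> i. of_int (r ! idx i))"
definition matI :: "int list list \<Rightarrow> real^8^8" where "matI m = (\<chi> i j. of_int (m ! idx i ! idx j))"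
definition mat2I :: "int list list \<Rightarrow> real^2^2" where "mat2I m = (\<chi> i j. of_int (m ! idx2 i ! idx2 j))"

definition kronI :: "int list list \<Rightarrow> int list list \<Rightarrow> int list list \<Rightarrow> int list list" where
 "kronI a b c = map (\<lambda>p. map (\<lambda>q. a!(p div 4)!(q div 4) * b!((p div 2) mod 2)!((q div 2) mod 2) * c!(p mod 2)!(q mod 2)) [0..<8]) [0..<8]"

definition P2L :: "int list list list" where
 "P2L = [[[1,0],[0,1]], [[0,1],[1,0]], [[0,-1],[1,0]], [[1,0],[0,-1]]]"

definition PL :: "int list list list" where
 "PL = [kronI a b c. a \<leftarrow> P2L, b \<leftarrow> P2L, c \<leftarrow> P2L]"

lemma kron3_I: "kron3 (mat2I a) (mat2I b) (mat2I c) = matI (kronI a b c)"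
proof -
  have "kron3 (mat2I a) (mat2I b) (mat2I c) $ ix p $ ix q = matI (kronI a b c) $ ix p $ ix q"
    if "p < 8" "q < 8" for p q
    using that by (simp add: kron3_def mat2I_def matI_def kronI_def idx2_dig)
  then show ?thesis by (simp add: vec_eq_iff all8)
qed

lemma PauliI_I: "PauliI = mat2I [[1,0],[0,1]]"
  by (simp add: eq22 mat2I_def PauliI_def mat_def)
lemma PauliX_I: "PauliX = mat2I [[0,1],[1,0]]"
  by (simp add: eq22 mat2I_def PauliX_def)
lemma PauliY_I: "PauliY = mat2I [[0,-1],[1,0]]"
  by (simp add: eq22 mat2I_def PauliY_def PauliX_def PauliZ_def matrix_matrix_mult_def sum2')
lemma PauliZ_I: "PauliZ = mat2I [[1,0],[0,-1]]"
  by (simp add: eq22 mat2I_def PauliZ_def)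

lemma P2_I: "P2 = mat2I ` set P2L"
  unfolding P2_def P2L_def PauliI_I PauliX_I PauliY_I PauliZ_I by simp

lemma Pauli3_I: "Pauli3 = matI ` set PL"
proof
  show "Pauli3 \<subseteq> matI ` set PL"
  proof
    fix M assume "M \<in> Pauli3"
    then obtain a b c where abc: "a \<in> set P2L" "b \<in> set P2L" "c \<in> set P2L"
       "M = kron3 (mat2I a) (mat2I b) (mat2I c)"
      unfolding Pauli3_alt P2_I by blast
    then have "kronI a b c \<in> set PL" unfolding PL_def by auto
    then show "M \<in> matI ` set PL" using abc by (simp add: kron3_I)
  qed
next
  show "matI ` set PL \<subseteq> Pauli3"
  proof
    fix M assume "M \<in> matI ` set PL"
    then obtain a b c where abc: "a \<in> set P2L" "b \<in> set P2L" "c \<in> set P2L" "M = matI (kronI a b c)"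
      unfolding PL_def by auto
    then have "M = kron3 (mat2I a) (mat2I b) (mat2I c)" by (simp add: kron3_I)
    then show "M \<in> Pauli3" unfolding Pauli3_alt P2_I using abc by blast
  qed
qed


definition mulI :: "int list list \<Rightarrow> int list \<Rightarrow> int list" where
  "mulI m r = map (\<lambda>row. sum_list (map2 (*) row r)) m"
definition dotI :: "int list \<Rightarrow> int list \<Rightarrow> int" where "dotI r s = sum_list (map2 (*) r s)"
definition negL :: "int list \<Rightarrow> int list" where "negL r = map uminus r"
definition mkI :: "nat \<Rightarrow> nat \<Rightarrow> int \<Rightarrow> int \<Rightarrow> int list" where
  "mkI p q s t = map (\<lambda>k. if k = p then s else if k = q then t else 0) [0..<8]"
definition fnz :: "int list \<Rightarrow> nat" where "fnz r = length (takeWhile (\<lambda>x. x = 0) r)"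
definition isR :: "int list \<Rightarrow> bool" where
  "isR r = (length r = 8 \<and> ((list_all (\<lambda>x. x = 1 \<or> x = -1) r \<and> prod_list r = 1) \<or>
     (let p = fnz r; q = 7 - fnz (rev r) in p < q \<and> q < 8 \<and> (r!p = 1 \<or> r!p = -1) \<and> (r!q = 1 \<or> r!q = -1)
        \<and> r = mkI p q (r!p) (r!q))))"

definition Reps :: "int list list" where "Reps = [[1,1,0,0,0,0,0,0], [1,0,1,0,0,0,0,0], [1,0,0,1,0,0,0,0], [1,0,0,0,1,0,0,0], [1,0,0,0,0,1,0,0], [1,0,0,0,0,0,1,0], [1,0,0,0,0,0,0,1], [1,1,1,1,1,1,1,1], [1,1,1,1,1,1,-1,-1], [1,1,1,1,1,-1,1,-1], [1,1,1,1,1,-1,-1,1], [1,1,1,-1,1,1,1,-1], [1,1,1,-1,1,1,-1,1], [1,1,1,-1,1,-1,1,1], [1,1,1,-1,1,-1,-1,-1]]"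
definition Certs :: "nat list list" where "Certs = [[0,2,4,6,16,18,20,22], [0,1,8,9,16,17,24,25], [0,1,2,3,16,17,18,19], [0,1,4,5,32,33,36,37], [0,1,2,3,4,5,6,7], [0,1,4,5,8,9,12,13], [0,1,2,3,4,5,6,7], [0,2,8,10,32,34,40,42], [0,2,4,6,8,10,12,14], [0,1,2,3,8,9,10,11], [0,1,2,3,8,9,10,11], [0,1,2,3,32,33,34,35], [0,1,2,3,4,5,6,7], [0,1,2,3,8,9,10,11], [0,1,2,3,4,5,6,7]]"
definition CovL :: "(nat \<times> nat \<times> bool) list" where "CovL = [(0,0,True), (2,0,False), (2,0,True), (0,0,False), (0,1,True), (8,1,False), (8,1,True), (0,1,False), (0,2,True), (3,2,True), (3,2,False), (0,2,False), (0,3,True), (32,3,False), (32,3,True), (0,3,False), (0,4,True), (3,4,True), (3,4,False), (0,4,False), (0,5,True), (12,5,True), (12,5,False), (0,5,False), (0,6,True), (3,6,True), (3,6,False), (0,6,False), (1,2,True), (2,2,True), (2,2,False), (1,2,False), (1,1,True), (9,1,False), (9,1,True), (1,1,False), (1,4,True), (2,4,True), (2,4,False), (1,4,False), (1,3,True), (33,3,False), (33,3,True), (1,3,False), (1,6,True), (2,6,True), (2,6,False), (1,6,False), (1,5,True), (13,5,True), (13,5,False), (1,5,False), (4,0,True), (6,0,False), (6,0,True), (4,0,False), (4,5,True), (8,5,True), (8,5,False), (4,5,False), (4,6,True), (7,6,True), (7,6,False), (4,6,False), (4,3,True), (36,3,False), (36,3,True), (4,3,False), (4,4,True), (7,4,True),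 (7,4,False), (4,4,False), (5,6,True), (6,6,True), (6,6,False), (5,6,False), (5,5,True), (9,5,True), (9,5,False), (5,5,False), (5,4,True), (6,4,True), (6,4,False), (5,4,False), (5,3,True), (37,3,False), (37,3,True), (5,3,False), (16,0,True), (18,0,False), (18,0,True), (16,0,False), (16,1,True), (24,1,False), (24,1,True), (16,1,False), (16,2,True), (19,2,True), (19,2,False), (16,2,False), (17,2,True), (18,2,True), (18,2,False), (17,2,False), (17,1,True), (25,1,False), (25,1,True), (17,1,False), (20,0,True), (22,0,False), (22,0,True), (20,0,False), (0,7,True), (0,8,True), (0,9,True), (0,10,True), (1,10,True), (1,9,True), (4,8,True), (32,7,False), (0,11,True), (0,12,True), (0,13,True), (0,14,True), (7,14,True), (10,13,False), (7,12,True), (32,11,False), (1,12,True), (1,11,True), (6,14,True), (11,13,False), (1,13,True), (1,14,True), (33,11,False), (6,12,True), (12,8,True), (8,7,False), (9,10,False), (8,9,False), (9,9,False), (8,10,False), (40,7,True), (8,8,False), (3,13,True), (3,14,True), (3,11,True), (3,12,True), (4,12,True), (35,11,False), (4,14,True), (9,13,True), (3,9,True), (3,10,True), (2,7,False), (2,8,False), (6,8,False), (34,7,True), (2,10,False), (2,9,False), (10,10,True), (11,9,False), (14,8,False), (10,7,True), (42,7,False), (10,8,True), (10,9,True), (11,10,False), (5,14,False), (8,13,False), (2,12,False), (2,11,False), (34,11,True), (5,12,False), (2,13,False), (2,14,False), (2,14,True), (2,13,True), (5,12,True), (34,11,False), (2,11,True), (2,12,True), (8,13,True), (5,14,True), (11,10,True),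 (10,9,False), (10,8,False), (42,7,True), (10,7,False), (14,8,True), (11,9,True), (10,10,False), (2,9,True), (2,10,True), (34,7,False), (6,8,True), (2,8,True), (2,7,True), (3,10,False), (3,9,False), (9,13,False), (4,14,False), (35,11,True), (4,12,False), (3,12,False), (3,11,False), (3,14,False), (3,13,False), (8,8,True), (40,7,False), (8,10,True), (9,9,True), (8,9,True), (9,10,True), (8,7,True), (12,8,False), (6,12,False), (33,11,True), (1,14,False), (1,13,False), (11,13,True), (6,14,False), (1,11,False), (1,12,False), (32,11,True), (7,12,False), (10,13,True), (7,14,False), (0,14,False), (0,13,False), (0,12,False), (0,11,False), (32,7,True), (4,8,False), (1,9,False), (1,10,False), (0,10,False), (0,9,False), (0,8,False), (0,7,False)]"

definition RL_I :: "int list list" where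
  "RL_I = [mkI p q s t. p \<leftarrow> [0..<8], q \<leftarrow> [Suc p..<8], s \<leftarrow> [1,-1], t \<leftarrow> [1,-1]]"
definition RL_II :: "int list list" where
  "RL_II = filter (\<lambda>r. prod_list r = 1) (product_lists (replicate 8 [1,-1]))"
definition RL :: "int list list" where "RL = RL_I @ RL_II"

definition PLc :: "int list list list" where "PLc = [[[1,0,0,0,0,0,0,0],[0,1,0,0,0,0,0,0],[0,0,1,0,0,0,0,0],[0,0,0,1,0,0,0,0],[0,0,0,0,1,0,0,0],[0,0,0,0,0,1,0,0],[0,0,0,0,0,0,1,0],[0,0,0,0,0,0,0,1]], [[0,1,0,0,0,0,0,0],[1,0,0,0,0,0,0,0],[0,0,0,1,0,0,0,0],[0,0,1,0,0,0,0,0],[0,0,0,0,0,1,0,0],[0,0,0,0,1,0,0,0],[0,0,0,0,0,0,0,1],[0,0,0,0,0,0,1,0]], [[0,-1,0,0,0,0,0,0],[1,0,0,0,0,0,0,0],[0,0,0,-1,0,0,0,0],[0,0,1,0,0,0,0,0],[0,0,0,0,0,-1,0,0],[0,0,0,0,1,0,0,0],[0,0,0,0,0,0,0,-1],[0,0,0,0,0,0,1,0]], [[1,0,0,0,0,0,0,0],[0,-1,0,0,0,0,0,0],[0,0,1,0,0,0,0,0],[0,0,0,-1,0,0,0,0],[0,0,0,0,1,0,0,0],[0,0,0,0,0,-1,0,0],[0,0,0,0,0,0,1,0],[0,0,0,0,0,0,0,-1]], [[0,0,1,0,0,0,0,0],[0,0,0,1,0,0,0,0],[1,0,0,0,0,0,0,0],[0,1,0,0,0,0,0,0],[0,0,0,0,0,0,1,0],[0,0,0,0,0,0,0,1],[0,0,0,0,1,0,0,0],[0,0,0,0,0,1,0,0]],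 [[0,0,0,1,0,0,0,0],[0,0,1,0,0,0,0,0],[0,1,0,0,0,0,0,0],[1,0,0,0,0,0,0,0],[0,0,0,0,0,0,0,1],[0,0,0,0,0,0,1,0],[0,0,0,0,0,1,0,0],[0,0,0,0,1,0,0,0]], [[0,0,0,-1,0,0,0,0],[0,0,1,0,0,0,0,0],[0,-1,0,0,0,0,0,0],[1,0,0,0,0,0,0,0],[0,0,0,0,0,0,0,-1],[0,0,0,0,0,0,1,0],[0,0,0,0,0,-1,0,0],[0,0,0,0,1,0,0,0]], [[0,0,1,0,0,0,0,0],[0,0,0,-1,0,0,0,0],[1,0,0,0,0,0,0,0],[0,-1,0,0,0,0,0,0],[0,0,0,0,0,0,1,0],[0,0,0,0,0,0,0,-1],[0,0,0,0,1,0,0,0],[0,0,0,0,0,-1,0,0]], [[0,0,-1,0,0,0,0,0],[0,0,0,-1,0,0,0,0],[1,0,0,0,0,0,0,0],[0,1,0,0,0,0,0,0],[0,0,0,0,0,0,-1,0],[0,0,0,0,0,0,0,-1],[0,0,0,0,1,0,0,0],[0,0,0,0,0,1,0,0]], [[0,0,0,-1,0,0,0,0],[0,0,-1,0,0,0,0,0],[0,1,0,0,0,0,0,0],[1,0,0,0,0,0,0,0],[0,0,0,0,0,0,0,-1],[0,0,0,0,0,0,-1,0],[0,0,0,0,0,1,0,0],[0,0,0,0,1,0,0,0]], [[0,0,0,1,0,0,0,0],[0,0,-1,0,0,0,0,0],[0,-1,0,0,0,0,0,0],[1,0,0,0,0,0,0,0],[0,0,0,0,0,0,0,1],[0,0,0,0,0,0,-1,0],[0,0,0,0,0,-1,0,0],[0,0,0,0,1,0,0,0]],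 [[0,0,-1,0,0,0,0,0],[0,0,0,1,0,0,0,0],[1,0,0,0,0,0,0,0],[0,-1,0,0,0,0,0,0],[0,0,0,0,0,0,-1,0],[0,0,0,0,0,0,0,1],[0,0,0,0,1,0,0,0],[0,0,0,0,0,-1,0,0]], [[1,0,0,0,0,0,0,0],[0,1,0,0,0,0,0,0],[0,0,-1,0,0,0,0,0],[0,0,0,-1,0,0,0,0],[0,0,0,0,1,0,0,0],[0,0,0,0,0,1,0,0],[0,0,0,0,0,0,-1,0],[0,0,0,0,0,0,0,-1]], [[0,1,0,0,0,0,0,0],[1,0,0,0,0,0,0,0],[0,0,0,-1,0,0,0,0],[0,0,-1,0,0,0,0,0],[0,0,0,0,0,1,0,0],[0,0,0,0,1,0,0,0],[0,0,0,0,0,0,0,-1],[0,0,0,0,0,0,-1,0]], [[0,-1,0,0,0,0,0,0],[1,0,0,0,0,0,0,0],[0,0,0,1,0,0,0,0],[0,0,-1,0,0,0,0,0],[0,0,0,0,0,-1,0,0],[0,0,0,0,1,0,0,0],[0,0,0,0,0,0,0,1],[0,0,0,0,0,0,-1,0]], [[1,0,0,0,0,0,0,0],[0,-1,0,0,0,0,0,0],[0,0,-1,0,0,0,0,0],[0,0,0,1,0,0,0,0],[0,0,0,0,1,0,0,0],[0,0,0,0,0,-1,0,0],[0,0,0,0,0,0,-1,0],[0,0,0,0,0,0,0,1]], [[0,0,0,0,1,0,0,0],[0,0,0,0,0,1,0,0],[0,0,0,0,0,0,1,0],[0,0,0,0,0,0,0,1],[1,0,0,0,0,0,0,0],[0,1,0,0,0,0,0,0],[0,0,1,0,0,0,0,0],[0,0,0,1,0,0,0,0]],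 [[0,0,0,0,0,1,0,0],[0,0,0,0,1,0,0,0],[0,0,0,0,0,0,0,1],[0,0,0,0,0,0,1,0],[0,1,0,0,0,0,0,0],[1,0,0,0,0,0,0,0],[0,0,0,1,0,0,0,0],[0,0,1,0,0,0,0,0]], [[0,0,0,0,0,-1,0,0],[0,0,0,0,1,0,0,0],[0,0,0,0,0,0,0,-1],[0,0,0,0,0,0,1,0],[0,-1,0,0,0,0,0,0],[1,0,0,0,0,0,0,0],[0,0,0,-1,0,0,0,0],[0,0,1,0,0,0,0,0]], [[0,0,0,0,1,0,0,0],[0,0,0,0,0,-1,0,0],[0,0,0,0,0,0,1,0],[0,0,0,0,0,0,0,-1],[1,0,0,0,0,0,0,0],[0,-1,0,0,0,0,0,0],[0,0,1,0,0,0,0,0],[0,0,0,-1,0,0,0,0]], [[0,0,0,0,0,0,1,0],[0,0,0,0,0,0,0,1],[0,0,0,0,1,0,0,0],[0,0,0,0,0,1,0,0],[0,0,1,0,0,0,0,0],[0,0,0,1,0,0,0,0],[1,0,0,0,0,0,0,0],[0,1,0,0,0,0,0,0]], [[0,0,0,0,0,0,0,1],[0,0,0,0,0,0,1,0],[0,0,0,0,0,1,0,0],[0,0,0,0,1,0,0,0],[0,0,0,1,0,0,0,0],[0,0,1,0,0,0,0,0],[0,1,0,0,0,0,0,0],[1,0,0,0,0,0,0,0]], [[0,0,0,0,0,0,0,-1],[0,0,0,0,0,0,1,0],[0,0,0,0,0,-1,0,0],[0,0,0,0,1,0,0,0],[0,0,0,-1,0,0,0,0],[0,0,1,0,0,0,0,0],[0,-1,0,0,0,0,0,0],[1,0,0,0,0,0,0,0]],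 [[0,0,0,0,0,0,1,0],[0,0,0,0,0,0,0,-1],[0,0,0,0,1,0,0,0],[0,0,0,0,0,-1,0,0],[0,0,1,0,0,0,0,0],[0,0,0,-1,0,0,0,0],[1,0,0,0,0,0,0,0],[0,-1,0,0,0,0,0,0]], [[0,0,0,0,0,0,-1,0],[0,0,0,0,0,0,0,-1],[0,0,0,0,1,0,0,0],[0,0,0,0,0,1,0,0],[0,0,-1,0,0,0,0,0],[0,0,0,-1,0,0,0,0],[1,0,0,0,0,0,0,0],[0,1,0,0,0,0,0,0]], [[0,0,0,0,0,0,0,-1],[0,0,0,0,0,0,-1,0],[0,0,0,0,0,1,0,0],[0,0,0,0,1,0,0,0],[0,0,0,-1,0,0,0,0],[0,0,-1,0,0,0,0,0],[0,1,0,0,0,0,0,0],[1,0,0,0,0,0,0,0]], [[0,0,0,0,0,0,0,1],[0,0,0,0,0,0,-1,0],[0,0,0,0,0,-1,0,0],[0,0,0,0,1,0,0,0],[0,0,0,1,0,0,0,0],[0,0,-1,0,0,0,0,0],[0,-1,0,0,0,0,0,0],[1,0,0,0,0,0,0,0]], [[0,0,0,0,0,0,-1,0],[0,0,0,0,0,0,0,1],[0,0,0,0,1,0,0,0],[0,0,0,0,0,-1,0,0],[0,0,-1,0,0,0,0,0],[0,0,0,1,0,0,0,0],[1,0,0,0,0,0,0,0],[0,-1,0,0,0,0,0,0]], [[0,0,0,0,1,0,0,0],[0,0,0,0,0,1,0,0],[0,0,0,0,0,0,-1,0],[0,0,0,0,0,0,0,-1],[1,0,0,0,0,0,0,0],[0,1,0,0,0,0,0,0],[0,0,-1,0,0,0,0,0],[0,0,0,-1,0,0,0,0]],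 [[0,0,0,0,0,1,0,0],[0,0,0,0,1,0,0,0],[0,0,0,0,0,0,0,-1],[0,0,0,0,0,0,-1,0],[0,1,0,0,0,0,0,0],[1,0,0,0,0,0,0,0],[0,0,0,-1,0,0,0,0],[0,0,-1,0,0,0,0,0]], [[0,0,0,0,0,-1,0,0],[0,0,0,0,1,0,0,0],[0,0,0,0,0,0,0,1],[0,0,0,0,0,0,-1,0],[0,-1,0,0,0,0,0,0],[1,0,0,0,0,0,0,0],[0,0,0,1,0,0,0,0],[0,0,-1,0,0,0,0,0]], [[0,0,0,0,1,0,0,0],[0,0,0,0,0,-1,0,0],[0,0,0,0,0,0,-1,0],[0,0,0,0,0,0,0,1],[1,0,0,0,0,0,0,0],[0,-1,0,0,0,0,0,0],[0,0,-1,0,0,0,0,0],[0,0,0,1,0,0,0,0]], [[0,0,0,0,-1,0,0,0],[0,0,0,0,0,-1,0,0],[0,0,0,0,0,0,-1,0],[0,0,0,0,0,0,0,-1],[1,0,0,0,0,0,0,0],[0,1,0,0,0,0,0,0],[0,0,1,0,0,0,0,0],[0,0,0,1,0,0,0,0]], [[0,0,0,0,0,-1,0,0],[0,0,0,0,-1,0,0,0],[0,0,0,0,0,0,0,-1],[0,0,0,0,0,0,-1,0],[0,1,0,0,0,0,0,0],[1,0,0,0,0,0,0,0],[0,0,0,1,0,0,0,0],[0,0,1,0,0,0,0,0]], [[0,0,0,0,0,1,0,0],[0,0,0,0,-1,0,0,0],[0,0,0,0,0,0,0,1],[0,0,0,0,0,0,-1,0],[0,-1,0,0,0,0,0,0],[1,0,0,0,0,0,0,0],[0,0,0,-1,0,0,0,0],[0,0,1,0,0,0,0,0]],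 [[0,0,0,0,-1,0,0,0],[0,0,0,0,0,1,0,0],[0,0,0,0,0,0,-1,0],[0,0,0,0,0,0,0,1],[1,0,0,0,0,0,0,0],[0,-1,0,0,0,0,0,0],[0,0,1,0,0,0,0,0],[0,0,0,-1,0,0,0,0]], [[0,0,0,0,0,0,-1,0],[0,0,0,0,0,0,0,-1],[0,0,0,0,-1,0,0,0],[0,0,0,0,0,-1,0,0],[0,0,1,0,0,0,0,0],[0,0,0,1,0,0,0,0],[1,0,0,0,0,0,0,0],[0,1,0,0,0,0,0,0]], [[0,0,0,0,0,0,0,-1],[0,0,0,0,0,0,-1,0],[0,0,0,0,0,-1,0,0],[0,0,0,0,-1,0,0,0],[0,0,0,1,0,0,0,0],[0,0,1,0,0,0,0,0],[0,1,0,0,0,0,0,0],[1,0,0,0,0,0,0,0]], [[0,0,0,0,0,0,0,1],[0,0,0,0,0,0,-1,0],[0,0,0,0,0,1,0,0],[0,0,0,0,-1,0,0,0],[0,0,0,-1,0,0,0,0],[0,0,1,0,0,0,0,0],[0,-1,0,0,0,0,0,0],[1,0,0,0,0,0,0,0]], [[0,0,0,0,0,0,-1,0],[0,0,0,0,0,0,0,1],[0,0,0,0,-1,0,0,0],[0,0,0,0,0,1,0,0],[0,0,1,0,0,0,0,0],[0,0,0,-1,0,0,0,0],[1,0,0,0,0,0,0,0],[0,-1,0,0,0,0,0,0]], [[0,0,0,0,0,0,1,0],[0,0,0,0,0,0,0,1],[0,0,0,0,-1,0,0,0],[0,0,0,0,0,-1,0,0],[0,0,-1,0,0,0,0,0],[0,0,0,-1,0,0,0,0],[1,0,0,0,0,0,0,0],[0,1,0,0,0,0,0,0]],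 [[0,0,0,0,0,0,0,1],[0,0,0,0,0,0,1,0],[0,0,0,0,0,-1,0,0],[0,0,0,0,-1,0,0,0],[0,0,0,-1,0,0,0,0],[0,0,-1,0,0,0,0,0],[0,1,0,0,0,0,0,0],[1,0,0,0,0,0,0,0]], [[0,0,0,0,0,0,0,-1],[0,0,0,0,0,0,1,0],[0,0,0,0,0,1,0,0],[0,0,0,0,-1,0,0,0],[0,0,0,1,0,0,0,0],[0,0,-1,0,0,0,0,0],[0,-1,0,0,0,0,0,0],[1,0,0,0,0,0,0,0]], [[0,0,0,0,0,0,1,0],[0,0,0,0,0,0,0,-1],[0,0,0,0,-1,0,0,0],[0,0,0,0,0,1,0,0],[0,0,-1,0,0,0,0,0],[0,0,0,1,0,0,0,0],[1,0,0,0,0,0,0,0],[0,-1,0,0,0,0,0,0]], [[0,0,0,0,-1,0,0,0],[0,0,0,0,0,-1,0,0],[0,0,0,0,0,0,1,0],[0,0,0,0,0,0,0,1],[1,0,0,0,0,0,0,0],[0,1,0,0,0,0,0,0],[0,0,-1,0,0,0,0,0],[0,0,0,-1,0,0,0,0]], [[0,0,0,0,0,-1,0,0],[0,0,0,0,-1,0,0,0],[0,0,0,0,0,0,0,1],[0,0,0,0,0,0,1,0],[0,1,0,0,0,0,0,0],[1,0,0,0,0,0,0,0],[0,0,0,-1,0,0,0,0],[0,0,-1,0,0,0,0,0]], [[0,0,0,0,0,1,0,0],[0,0,0,0,-1,0,0,0],[0,0,0,0,0,0,0,-1],[0,0,0,0,0,0,1,0],[0,-1,0,0,0,0,0,0],[1,0,0,0,0,0,0,0],[0,0,0,1,0,0,0,0],[0,0,-1,0,0,0,0,0]],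 [[0,0,0,0,-1,0,0,0],[0,0,0,0,0,1,0,0],[0,0,0,0,0,0,1,0],[0,0,0,0,0,0,0,-1],[1,0,0,0,0,0,0,0],[0,-1,0,0,0,0,0,0],[0,0,-1,0,0,0,0,0],[0,0,0,1,0,0,0,0]], [[1,0,0,0,0,0,0,0],[0,1,0,0,0,0,0,0],[0,0,1,0,0,0,0,0],[0,0,0,1,0,0,0,0],[0,0,0,0,-1,0,0,0],[0,0,0,0,0,-1,0,0],[0,0,0,0,0,0,-1,0],[0,0,0,0,0,0,0,-1]], [[0,1,0,0,0,0,0,0],[1,0,0,0,0,0,0,0],[0,0,0,1,0,0,0,0],[0,0,1,0,0,0,0,0],[0,0,0,0,0,-1,0,0],[0,0,0,0,-1,0,0,0],[0,0,0,0,0,0,0,-1],[0,0,0,0,0,0,-1,0]], [[0,-1,0,0,0,0,0,0],[1,0,0,0,0,0,0,0],[0,0,0,-1,0,0,0,0],[0,0,1,0,0,0,0,0],[0,0,0,0,0,1,0,0],[0,0,0,0,-1,0,0,0],[0,0,0,0,0,0,0,1],[0,0,0,0,0,0,-1,0]], [[1,0,0,0,0,0,0,0],[0,-1,0,0,0,0,0,0],[0,0,1,0,0,0,0,0],[0,0,0,-1,0,0,0,0],[0,0,0,0,-1,0,0,0],[0,0,0,0,0,1,0,0],[0,0,0,0,0,0,-1,0],[0,0,0,0,0,0,0,1]], [[0,0,1,0,0,0,0,0],[0,0,0,1,0,0,0,0],[1,0,0,0,0,0,0,0],[0,1,0,0,0,0,0,0],[0,0,0,0,0,0,-1,0],[0,0,0,0,0,0,0,-1],[0,0,0,0,-1,0,0,0],[0,0,0,0,0,-1,0,0]],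 [[0,0,0,1,0,0,0,0],[0,0,1,0,0,0,0,0],[0,1,0,0,0,0,0,0],[1,0,0,0,0,0,0,0],[0,0,0,0,0,0,0,-1],[0,0,0,0,0,0,-1,0],[0,0,0,0,0,-1,0,0],[0,0,0,0,-1,0,0,0]], [[0,0,0,-1,0,0,0,0],[0,0,1,0,0,0,0,0],[0,-1,0,0,0,0,0,0],[1,0,0,0,0,0,0,0],[0,0,0,0,0,0,0,1],[0,0,0,0,0,0,-1,0],[0,0,0,0,0,1,0,0],[0,0,0,0,-1,0,0,0]], [[0,0,1,0,0,0,0,0],[0,0,0,-1,0,0,0,0],[1,0,0,0,0,0,0,0],[0,-1,0,0,0,0,0,0],[0,0,0,0,0,0,-1,0],[0,0,0,0,0,0,0,1],[0,0,0,0,-1,0,0,0],[0,0,0,0,0,1,0,0]], [[0,0,-1,0,0,0,0,0],[0,0,0,-1,0,0,0,0],[1,0,0,0,0,0,0,0],[0,1,0,0,0,0,0,0],[0,0,0,0,0,0,1,0],[0,0,0,0,0,0,0,1],[0,0,0,0,-1,0,0,0],[0,0,0,0,0,-1,0,0]], [[0,0,0,-1,0,0,0,0],[0,0,-1,0,0,0,0,0],[0,1,0,0,0,0,0,0],[1,0,0,0,0,0,0,0],[0,0,0,0,0,0,0,1],[0,0,0,0,0,0,1,0],[0,0,0,0,0,-1,0,0],[0,0,0,0,-1,0,0,0]], [[0,0,0,1,0,0,0,0],[0,0,-1,0,0,0,0,0],[0,-1,0,0,0,0,0,0],[1,0,0,0,0,0,0,0],[0,0,0,0,0,0,0,-1],[0,0,0,0,0,0,1,0],[0,0,0,0,0,1,0,0],[0,0,0,0,-1,0,0,0]],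 [[0,0,-1,0,0,0,0,0],[0,0,0,1,0,0,0,0],[1,0,0,0,0,0,0,0],[0,-1,0,0,0,0,0,0],[0,0,0,0,0,0,1,0],[0,0,0,0,0,0,0,-1],[0,0,0,0,-1,0,0,0],[0,0,0,0,0,1,0,0]], [[1,0,0,0,0,0,0,0],[0,1,0,0,0,0,0,0],[0,0,-1,0,0,0,0,0],[0,0,0,-1,0,0,0,0],[0,0,0,0,-1,0,0,0],[0,0,0,0,0,-1,0,0],[0,0,0,0,0,0,1,0],[0,0,0,0,0,0,0,1]], [[0,1,0,0,0,0,0,0],[1,0,0,0,0,0,0,0],[0,0,0,-1,0,0,0,0],[0,0,-1,0,0,0,0,0],[0,0,0,0,0,-1,0,0],[0,0,0,0,-1,0,0,0],[0,0,0,0,0,0,0,1],[0,0,0,0,0,0,1,0]], [[0,-1,0,0,0,0,0,0],[1,0,0,0,0,0,0,0],[0,0,0,1,0,0,0,0],[0,0,-1,0,0,0,0,0],[0,0,0,0,0,1,0,0],[0,0,0,0,-1,0,0,0],[0,0,0,0,0,0,0,-1],[0,0,0,0,0,0,1,0]], [[1,0,0,0,0,0,0,0],[0,-1,0,0,0,0,0,0],[0,0,-1,0,0,0,0,0],[0,0,0,1,0,0,0,0],[0,0,0,0,-1,0,0,0],[0,0,0,0,0,1,0,0],[0,0,0,0,0,0,1,0],[0,0,0,0,0,0,0,-1]]]"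

lemma PL_PLc: "PL = PLc"
  by code_simp




lemma g_PLc: "length PLc = 64 \<and> (\<forall>m\<in>set PLc. length m = 8 \<and> (\<forall>row\<in>set m. length row = 8))"
  by code_simp


lemma g_reps: "\<forall>r0\<in>set Reps. length r0 = 8 \<and> (\<forall>m\<in>set PLc. let v = mulI m r0 in isR v \<and> (v = r0 \<or> v = negL r0 \<or> dotI r0 v = 0))"
  by code_simp


lemma g_cert: "length Reps = 15 \<and> length Certs = 15 \<and> (\<forall>b<15. let r0 = Reps!b; c = Certs!b; vs = map (\<lambda>i. mulI (PLc!i) r0) c in
   length c = 8 \<and> (\<forall>i\<in>set c. i < 64) \<and> (\<forall>p<8. \<forall>q<8. p \<noteq> q \<longrightarrow> dotI (vs!p) (vs!q) = 0) \<and> (\<forall>p<8. dotI (vs!p) (vs!p) \<noteq> 0))"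
  by code_simp


lemma g_cov: "list_all2 (\<lambda>r (a,b,sg). a < 64 \<and> b < 15 \<and> r = (if sg then mulI (PLc!a) (Reps!b) else negL (mulI (PLc!a) (Reps!b)))) RL CovL"
  by code_simp




lemma len8_ex: "length r = 8 \<Longrightarrow> \<exists>a0 a1 a2 a3 a4 a5 a6 a7. r = [a0,a1,a2,a3,a4,a5,a6,a7]"
  by (simp add: numeral_eq_Suc length_Suc_conv) blast

lemma sum_map2_8: "length a = 8 \<Longrightarrow> length b = 8 \<Longrightarrow> sum_list (map2 (*) a b) = (\<Sum>k<8. a!k * (b!k::int))"
  using len8_ex[of a] len8_ex[of b] by (auto simp: lt8)

lemma prod_list8: "length r = 8 \<Longrightarrow> prod_list r = (\<Prod>k<8. (r!k::int))"
  using len8_ex[of r] by (auto simp: lt8)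

lemma vecI_ix: "k < 8 \<Longrightarrow> vecI r $ ix k = of_int (r!k)"
  by (simp add: vecI_def)

lemma matI_ix: "p < 8 \<Longrightarrow> k < 8 \<Longrightarrow> matI m $ ix p $ ix k = of_int (m!p!k)"
  by (simp add: matI_def)

lemma length_mulI[simp]: "length (mulI m r) = length m"
  by (simp add: mulI_def)

lemma matI_mulI:
  assumes "length m = 8" "\<forall>row\<in>set m. length row = 8" "length r = 8"
  shows "matI m *v vecI r = vecI (mulI m r)"
proof -
  have "(matI m *v vecI r) $ ix p = vecI (mulI m r) $ ix p" if p: "p < 8" for p
  proof -
    have lp: "length (m!p) = 8" using assms(1,2) p by simp
    have "(matI m *v vecI r) $ ix p = (\<Sum>k<8. matI m $ ix p $ ix k * vecI r $ ix k)"
      by (simp add: matrix_vector_mult_def sum_UNIV8)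
    also have "\<dots> = (\<Sum>k<8. of_int (m!p!k * r!k))"
      by (rule sum.cong) (simp_all add: matI_ix vecI_ix p)
    also have "\<dots> = of_int (\<Sum>k<8. m!p!k * r!k)" by simp
    also have "\<dots> = of_int (mulI m r ! p)"
      using assms(1) p lp assms(3) by (simp add: mulI_def sum_map2_8)
    also have "\<dots> = vecI (mulI m r) $ ix p" using p by (simp add: vecI_ix)
    finally show ?thesis .
  qed
  then show ?thesis by (simp add: vec_eq_iff all8)
qed

lemma inner_vecI:
  assumes "length r = 8" "length s = 8"
  shows "inner (vecI r) (vecI s) = of_int (dotI r s)"
proof -
  have "inner (vecI r) (vecI s) = (\<Sum>k<8. vecI r $ ix k * vecI s $ ix k)"
    by (simp add: inner_vec_def sum_UNIV8)
  also have "\<dots> = (\<Sum>k<8. of_int (r!k * s!k))"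
    by (rule sum.cong) (simp_all add: vecI_ix)
  also have "\<dots> = of_int (dotI r s)" using assms by (simp add: dotI_def sum_map2_8)
  finally show ?thesis .
qed

lemma vecI_negL: "length r = 8 \<Longrightarrow> vecI (negL r) = - vecI r"
  by (simp add: vec_eq_iff vecI_def negL_def idx_lt)

lemma vecI_mkI:
  assumes "p < 8" "q < 8" "p \<noteq> q"
  shows "vecI (mkI p q s t) = of_int s *\<^sub>R axis (ix p) 1 + of_int t *\<^sub>R axis (ix q) 1"
proof -
  have "vecI (mkI p q s t) $ ix k = (of_int s *\<^sub>R axis (ix p) 1 + of_int t *\<^sub>R axis (ix q) 1) $ ix k"
    if k: "k < 8" for k
    using k assms by (auto simp: vecI_ix mkI_def axis_def ix_inj)
  then show ?thesis by (simp add: vec_eq_iff all8)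
qed

lemma mkI_swap: "p \<noteq> q \<Longrightarrow> mkI p q s t = mkI q p t s"
  by (auto simp: mkI_def)


lemma typeI_root: "i \<noteq> j \<Longrightarrow> s \<in> {1,-1} \<Longrightarrow> t \<in> {1,-1} \<Longrightarrow> s *\<^sub>R axis i 1 + t *\<^sub>R axis j 1 \<in> E8_roots"
  unfolding E8_roots_def by blast

lemma typeII_root: "(\<forall>i. x $ i \<in> {1,-1}) \<Longrightarrow> (\<Prod>i\<in>UNIV. x $ i) = 1 \<Longrightarrow> x \<in> E8_roots"
  unfolding E8_roots_def by blast

lemma isR_root: assumes "isR r" shows "vecI r \<in> E8_roots"
proof -
  have len: "length r = 8" using assms by (simp add: isR_def)
  define p where "p = fnz r"
  define q where "q = 7 - fnz (rev r)"
  have "(list_all (\<lambda>x. x = 1 \<or> x = -1) r \<and> prod_list r = 1) \<or>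
     (p < q \<and> q < 8 \<and> (r!p = 1 \<or> r!p = -1) \<and> (r!q = 1 \<or> r!q = -1) \<and> r = mkI p q (r!p) (r!q))"
    using assms unfolding isR_def p_def q_def Let_def by simp
  then show ?thesis
  proof
    assume II: "list_all (\<lambda>x. x = 1 \<or> x = -1) r \<and> prod_list r = 1"
    have "vecI r $ i \<in> {1,-1}" for i
    proof -
      have "r ! idx i \<in> set r" using len idx_lt[of i] by simp
      then have "r ! idx i = 1 \<or> r ! idx i = -1" using II by (simp add: list_all_iff)
      then show ?thesis by (auto simp: vecI_def)
    qed
    moreover have "(\<Prod>i\<in>UNIV. vecI r $ i) = 1"
    proof -
      have "(\<Prod>i\<in>UNIV. vecI r $ i) = (\<Prod>k<8. vecI r $ ix k)" by (simp add: prod_UNIV8)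
      also have "\<dots> = (\<Prod>k<8. of_int (r!k))" by (rule prod.cong) (simp_all add: vecI_ix)
      also have "\<dots> = of_int (prod_list r)" using len by (simp add: prod_list8)
      finally show ?thesis using II by simp
    qed
    ultimately show ?thesis using typeII_root by blast
  next
    assume I: "p < q \<and> q < 8 \<and> (r!p = 1 \<or> r!p = -1) \<and> (r!q = 1 \<or> r!q = -1) \<and> r = mkI p q (r!p) (r!q)"
    have Ip: "p < q" "q < 8" "r!p = 1 \<or> r!p = -1" "r!q = 1 \<or> r!q = -1" using I by blast+
    have Ieq: "r = mkI p q (r!p) (r!q)" using I by blast
    have "vecI r = vecI (mkI p q (r!p) (r!q))" using Ieq by (rule arg_cong)
    also have "\<dots> = of_int (r!p) *\<^sub>R axis (ix p) 1 + of_int (r!q) *\<^sub>R axis (ix q) 1"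
      using Ip by (intro vecI_mkI) simp_all
    finally have "vecI r = of_int (r!p) *\<^sub>R axis (ix p) 1 + of_int (r!q) *\<^sub>R axis (ix q) 1" .
    moreover have "ix p \<noteq> ix q" using Ip by (simp add: ix_inj)
    moreover have "(of_int (r!p)::real) \<in> {1,-1}" "(of_int (r!q)::real) \<in> {1,-1}" using Ip(3,4) by auto
    ultimately show ?thesis using typeI_root by simp
  qed
qed


lemma mkI_in_RL_I: "p < q \<Longrightarrow> q < 8 \<Longrightarrow> s \<in> {1,-1} \<Longrightarrow> t \<in> {1,-1} \<Longrightarrow> mkI p q s t \<in> set RL_I"
  unfolding RL_I_def by force

lemma roots_RL: assumes "y \<in> E8_roots" shows "\<exists>r\<in>set RL. y = vecI r"
proof -
  from assms consider (I) i j s t where "i \<noteq> j" "s \<in> {1,-1}" "t \<in> {1,-1}" "y = s *\<^sub>R axis i 1 + t *\<^sub>R axis j 1"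
    | (II) "\<forall>i. y $ i \<in> {1,-1}" "(\<Prod>i\<in>UNIV. y $ i) = 1"
    unfolding E8_roots_def by blast
  then show ?thesis
  proof cases
    case I
    define p where "p = idx i"
    define q where "q = idx j"
    define si where "si = (if s = 1 then 1 else -1::int)"
    define ti where "ti = (if t = 1 then 1 else -1::int)"
    have pq: "i = ix p" "j = ix q" "p < 8" "q < 8" by (simp_all add: p_def q_def idx_lt)
    have pnq: "p \<noteq> q" using I(1) pq by auto
    have sti: "of_int si = s" "of_int ti = t" "si \<in> {1,-1}" "ti \<in> {1,-1}"
      using I(2,3) by (auto simp: si_def ti_def)
    have y: "y = vecI (mkI p q si ti)"
      using vecI_mkI[OF pq(3,4) pnq, of si ti] I(4) pq sti by simp
    show ?thesis
    proof (cases "p < q")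
      case True
      then have "mkI p q si ti \<in> set RL" using mkI_in_RL_I[OF True pq(4) sti(3,4)] by (simp add: RL_def)
      then show ?thesis using y by blast
    next
      case False
      then have "q < p" using pnq by simp
      then have "mkI q p ti si \<in> set RL" using mkI_in_RL_I[OF _ pq(3) sti(4,3)] by (simp add: RL_def)
      then show ?thesis using y mkI_swap[OF pnq] by metis
    qed
  next
    case II
    define r where "r = map (\<lambda>k. if y $ ix k = 1 then 1 else -1::int) [0..<8]"
    have len: "length r = 8" by (simp add: r_def)
    have rk: "r ! k = (if y $ ix k = 1 then 1 else -1)" if "k < 8" for k
      using that by (simp add: r_def)
    have yk: "y $ ix k = of_int (r!k)" if "k < 8" for k
      using II(1) rk[OF that] by (cases "y $ ix k = 1") auto
    have y: "y = vecI r"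
      by (simp add: vec_eq_iff all8 vecI_ix yk)
    have "r \<in> set (product_lists (replicate 8 [1,-1]))"
      unfolding product_lists_set by (simp add: list_all2_conv_all_nth len rk)
    moreover have "prod_list r = 1"
    proof -
      have "(of_int (prod_list r)::real) = (\<Prod>k<8. of_int (r!k))" using len by (simp add: prod_list8)
      also have "\<dots> = (\<Prod>k<8. y $ ix k)" by (rule prod.cong) (simp_all add: yk)
      also have "\<dots> = 1" using II(2) by (simp add: prod_UNIV8)
      finally show ?thesis by simp
    qed
    ultimately have "r \<in> set RL" by (simp add: RL_def RL_II_def)
    then show ?thesis using y by blast
  qed
qed

lemma finite_roots: "finite E8_roots"
proof -
  have "E8_roots \<subseteq> vecI ` set RL" using roots_RL by blast
  then show ?thesis by (rule finite_subset) simp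
qed

lemma g_PL: "length PL = 64" "m \<in> set PL \<Longrightarrow> length m = 8 \<and> (\<forall>row\<in>set m. length row = 8)"
  using g_PLc unfolding PL_PLc by auto

lemma rep_len: "b < 15 \<Longrightarrow> Reps!b \<in> set Reps \<and> length (Reps!b) = 8"
  using g_cert g_reps by auto

lemma PP_ex: "M \<in> Pauli3 \<Longrightarrow> \<exists>m\<in>set PL. M = matI m"
  unfolding Pauli3_I by blast

lemma PL_nth_PP: "a < 64 \<Longrightarrow> matI (PL!a) \<in> Pauli3"
  unfolding Pauli3_I using g_PL(1) by simp

lemma cover: assumes "y \<in> E8_roots"
  shows "\<exists>N\<in>Pauli3. \<exists>b<15. \<exists>e\<in>{1,-1::real}. y = e *\<^sub>R (N *v vecI (Reps!b))"
proof -
  obtain r where r: "r \<in> set RL" "y = vecI r" using roots_RL[OF assms] by blast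
  obtain n where n: "n < length RL" "r = RL!n" using r(1) by (metis in_set_conv_nth)
  have la: "length CovL = length RL" using g_cov by (simp add: list_all2_lengthD)
  obtain a b sg where abs: "CovL!n = (a,b,sg)" by (metis prod_cases3)
  have P: "a < 64 \<and> b < 15 \<and> r = (if sg then mulI (PLc!a) (Reps!b) else negL (mulI (PLc!a) (Reps!b)))"
    using list_all2_nthD[OF g_cov n(1)] abs n(2) by simp
  define N where "N = matI (PL!a)"
  have N: "N \<in> Pauli3" using P PL_nth_PP by (simp add: N_def)
  have "PL!a \<in> set PL" using g_PL(1) P by simp
  then have lm: "length (PL!a) = 8" "\<forall>row\<in>set (PL!a). length row = 8" using g_PL(2) by blast+
  have lr: "length (Reps!b) = 8" using rep_len P by blast
  have Nv: "N *v vecI (Reps!b) = vecI (mulI (PL!a) (Reps!b))"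
    unfolding N_def by (rule matI_mulI[OF lm lr])
  show ?thesis
  proof (cases sg)
    case True
    then have "y = 1 *\<^sub>R (N *v vecI (Reps!b))" using P r(2) Nv by (simp add: PL_PLc)
    then show ?thesis using N P by blast
  next
    case False
    have "length (mulI (PL!a) (Reps!b)) = 8" using lm by simp
    then have "y = (-1) *\<^sub>R (N *v vecI (Reps!b))" using False P r(2) Nv by (simp add: PL_PLc vecI_negL)
    then show ?thesis using N P by blast
  qed
qed

lemma rep_R13:
  assumes "b < 15" "M \<in> Pauli3"
  shows "M *v vecI (Reps!b) \<in> E8_roots \<and> (M *v vecI (Reps!b) = vecI (Reps!b) \<or> M *v vecI (Reps!b) = - vecI (Reps!b)
     \<or> inner (vecI (Reps!b)) (M *v vecI (Reps!b)) = 0)"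
proof -
  obtain m where m: "m \<in> set PL" "M = matI m" using PP_ex assms(2) by blast
  have lm: "length m = 8" "\<forall>row\<in>set m. length row = 8" using g_PL m by auto
  have lr: "length (Reps!b) = 8" "Reps!b \<in> set Reps" using rep_len assms by auto
  define v where "v = mulI m (Reps!b)"
  have lv: "length v = 8" using lm by (simp add: v_def)
  have Mv: "M *v vecI (Reps!b) = vecI v" unfolding m(2) v_def by (rule matI_mulI[OF lm lr(1)])
  have G: "isR v \<and> (v = Reps!b \<or> v = negL (Reps!b) \<or> dotI (Reps!b) v = 0)"
    using g_reps lr(2) m(1) unfolding PL_PLc v_def by (simp add: Let_def)
  show ?thesis
    using G isR_root[of v] vecI_negL[OF lr(1)] inner_vecI[OF lr(1) lv] unfolding Mv by auto
qed


lemma rep_span: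
  assumes b: "b < 15"
  shows "span ((\<lambda>M. M *v vecI (Reps!b)) ` Pauli3) = UNIV"
proof -
  define r0 where "r0 = Reps!b"
  define c where "c = Certs!b"
  define vs where "vs = map (\<lambda>i. mulI (PLc!i) r0) c"
  have G: "length c = 8" "\<forall>i\<in>set c. i < 64"
    "\<forall>p<8. \<forall>q<8. p \<noteq> q \<longrightarrow> dotI (vs!p) (vs!q) = 0" "\<forall>p<8. dotI (vs!p) (vs!p) \<noteq> 0"
    using g_cert b unfolding r0_def c_def vs_def Let_def by auto
  have lr: "length r0 = 8" using rep_len b r0_def by blast
  define V where "V k = vecI (vs!k)" for k
  have ck: "c!k < 64" if "k < 8" for k using G(1,2) that by simp
  have lv: "length (vs!k) = 8" if "k < 8" for k
  proof -
    have "PL!(c!k) \<in> set PL" using g_PL(1) ck[OF that] by simp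
    then show ?thesis using g_PL(2) that G(1) by (simp add: vs_def PL_PLc)
  qed
  have Vimg: "V k \<in> (\<lambda>M. M *v vecI r0) ` Pauli3" if "k < 8" for k
  proof -
    have "PL!(c!k) \<in> set PL" using g_PL(1) ck[OF that] by simp
    then have lm: "length (PL!(c!k)) = 8" "\<forall>row\<in>set (PL!(c!k)). length row = 8" using g_PL(2) by blast+
    have "V k = matI (PL!(c!k)) *v vecI r0"
      using matI_mulI[OF lm lr] that G(1) by (simp add: V_def vs_def PL_PLc)
    then show ?thesis using PL_nth_PP[OF ck[OF that]] by blast
  qed
  have orth: "inner (V k) (V l) = 0" if "k < 8" "l < 8" "k \<noteq> l" for k l
    using G(3) that inner_vecI[OF lv lv] by (simp add: V_def)
  have nz: "inner (V k) (V k) \<noteq> 0" if "k < 8" for k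
    using G(4) that inner_vecI[OF lv lv] by (simp add: V_def)
  define S where "S = V ` {..<8}"
  have inj: "inj_on V {..<8}"
  proof (rule inj_onI)
    fix k l assume kl: "k \<in> {..<8}" "l \<in> {..<8}" "V k = V l"
    show "k = l"
    proof (rule ccontr)
      assume "k \<noteq> l"
      moreover have "k < 8" "l < 8" using kl(1,2) by auto
      ultimately have "inner (V k) (V l) = 0" using orth by blast
      then have "inner (V k) (V k) = 0" using kl(3) by metis
      then show False using nz kl(1) by simp
    qed
  qed
  have cardS: "card S = 8" unfolding S_def using card_image[OF inj] by simp
  have "pairwise orthogonal S"
    unfolding S_def pairwise_def orthogonal_def using orth by auto
  moreover have "0 \<notin> S" unfolding S_def using nz by auto
  ultimately have ind: "independent S" by (rule pairwise_orthogonal_independent)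
  have "finite S" unfolding S_def by simp
  then have "UNIV \<subseteq> span S" using card_eq_dim[of S UNIV] ind cardS by (simp add: dim_UNIV)
  moreover have "S \<subseteq> (\<lambda>M. M *v vecI r0) ` Pauli3" unfolding S_def using Vimg by auto
  ultimately show ?thesis unfolding r0_def by (metis span_mono top.extremum_uniqueI subset_trans)
qed




lemma vert_eq: "vert a = vert b \<longleftrightarrow> a = b \<or> a = -b"
  by (auto simp: vert_def doubleton_eq_iff)

lemma mv_neg: "M *v (- x) = - (M *v (x::real^8))"
  by (simp add: vec_eq_iff matrix_vector_mult_def sum_negf)

lemma mv_scale: "M *v (c *\<^sub>R x) = c *\<^sub>R (M *v (x::real^8))"
  by (simp add: vec_eq_iff matrix_vector_mult_def sum_distrib_left ac_simps)

lemma scale_mv: "(c *\<^sub>R M) *v x = c *\<^sub>R (M *v (x::real^8))"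
  by (simp add: vec_eq_iff matrix_vector_mult_def sum_distrib_left ac_simps)

lemma mm_scale: "M ** (c *\<^sub>R N) = c *\<^sub>R (M ** (N::real^8^8))"
  by (simp add: vec_eq_iff matrix_matrix_mult_def sum_distrib_left ac_simps)

lemma sigma_vert: "sigma M (vert x) = vert (M *v x)"
  by (simp add: sigma_def vert_def mv_neg)

lemma L_orbit_vert: "L_orbit (vert x) = (\<lambda>M. vert (M *v x)) ` Pauli3"
  by (auto simp: L_orbit_def sigma_vert)

lemma vert_sign: "e \<in> {1,-1::real} \<Longrightarrow> vert (e *\<^sub>R x) = vert x"
  by (auto simp: vert_def)

lemma vert_mv: "vert x = vert x' \<Longrightarrow> vert (M *v x) = vert (M *v x')"
  by (auto simp: vert_eq mv_neg)

lemma PP_mv_inv: "M \<in> Pauli3 \<Longrightarrow> transpose M *v (M *v x) = x"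
  using PP_orth by (simp add: matrix_vector_mul_assoc del: transpose_matrix_vector)

lemma PP_mv_inv2: "M \<in> Pauli3 \<Longrightarrow> M *v (transpose M *v x) = x"
  using PP_orth by (simp add: matrix_vector_mul_assoc del: transpose_matrix_vector)

lemma vert_mv_inv: "M \<in> Pauli3 \<Longrightarrow> vert (M *v x) = vert (M *v x') \<Longrightarrow> vert x = vert x'"
  by (metis PP_mv_inv vert_mv)

lemma PP_inner: "M \<in> Pauli3 \<Longrightarrow> inner (M *v x) (M *v z) = inner x z"
proof -
  assume M: "M \<in> Pauli3"
  have "inner (M *v x) (M *v z) = inner (x v* transpose M) (M *v z)" by simp
  also have "\<dots> = inner x (transpose M *v (M *v z))" by (rule dot_lmul_matrix)
  also have "\<dots> = inner x z" using PP_mv_inv[OF M] by simp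
  finally show ?thesis .
qed

lemma PP_mult_v: "M \<in> Pauli3 \<Longrightarrow> N \<in> Pauli3 \<Longrightarrow> \<exists>K\<in>Pauli3. \<exists>e\<in>{1,-1::real}. M *v (N *v x) = e *\<^sub>R (K *v x)"
  by (metis PP_mult matrix_vector_mul_assoc scale_mv)

lemma PP_mult_mv: "M \<in> Pauli3 \<Longrightarrow> N \<in> Pauli3 \<Longrightarrow> \<exists>K\<in>Pauli3. vert (M *v (N *v x)) = vert (K *v x)"
  by (metis PP_mult_v vert_sign)

lemma PP_trans_v: "M \<in> Pauli3 \<Longrightarrow> \<exists>e\<in>{1,-1::real}. transpose M *v x = e *\<^sub>R (M *v x)"
  by (metis PP_trans scale_mv)

lemma PP_trans_mv: "M \<in> Pauli3 \<Longrightarrow> vert (transpose M *v x) = vert (M *v x)"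
  by (metis PP_trans_v vert_sign)

lemma PP_comm_v: "M \<in> Pauli3 \<Longrightarrow> N \<in> Pauli3 \<Longrightarrow> \<exists>e\<in>{1,-1::real}. M *v (N *v x) = e *\<^sub>R (N *v (M *v x))"
proof -
  assume "M \<in> Pauli3" "N \<in> Pauli3"
  then obtain e where e: "e \<in> {1,-1::real}" "M ** N = e *\<^sub>R (N ** M)" using PP_comm by blast
  have "M *v (N *v x) = e *\<^sub>R (N *v (M *v x))"
    by (simp add: matrix_vector_mul_assoc scale_mv e(2))
  then show ?thesis using e(1) by blast
qed

lemma PP_comm_mv: "M \<in> Pauli3 \<Longrightarrow> N \<in> Pauli3 \<Longrightarrow> vert (M *v (N *v x)) = vert (N *v (M *v x))"
proof -
  assume "M \<in> Pauli3" "N \<in> Pauli3"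
  then obtain e where e: "e \<in> {1,-1::real}" "M *v (N *v x) = e *\<^sub>R (N *v (M *v x))" using PP_comm_v by blast
  then show ?thesis using vert_sign by simp
qed

lemma OE: assumes A: "A \<in> Pauli3" shows "L_orbit (vert (A *v y)) = L_orbit (vert y)"
proof
  show "L_orbit (vert (A *v y)) \<subseteq> L_orbit (vert y)"
    unfolding L_orbit_vert using PP_mult_mv[OF _ A] by blast
next
  show "L_orbit (vert y) \<subseteq> L_orbit (vert (A *v y))"
  proof
    fix k assume "k \<in> L_orbit (vert y)"
    then obtain M where M: "M \<in> Pauli3" "k = vert (M *v y)" unfolding L_orbit_vert by blast
    have "vert (M *v y) = vert (M *v (transpose A *v (A *v y)))" using PP_mv_inv[OF A] by simp
    also have "\<dots> = vert (M *v (A *v (A *v y)))" using PP_trans_mv[OF A] by (metis vert_mv)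
    finally have 1: "vert (M *v y) = vert (M *v (A *v (A *v y)))" .
    obtain K where "K \<in> Pauli3" "vert (M *v (A *v (A *v y))) = vert (K *v (A *v y))"
      using PP_mult_mv[OF M(1) A] by blast
    with 1 show "k \<in> L_orbit (vert (A *v y))" unfolding L_orbit_vert using M(2) by blast
  qed
qed

lemma L_self: "vert y \<in> L_orbit (vert y)"
  unfolding L_orbit_vert using PP_id by force

lemma L_sub: "k \<in> L_orbit (vert y) \<Longrightarrow> L_orbit k = L_orbit (vert y)"
  unfolding L_orbit_vert using OE L_orbit_vert by auto


lemma roots_neg: assumes "y \<in> E8_roots" shows "- y \<in> E8_roots"
proof -
  from assms consider (I) i j s t where "i \<noteq> j" "s \<in> {1,-1::real}" "t \<in> {1,-1::real}" "y = s *\<^sub>R axis i 1 + t *\<^sub>R axis j 1"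
    | (II) "\<forall>i. y $ i \<in> {1,-1}" "(\<Prod>i\<in>UNIV. y $ i) = 1"
    unfolding E8_roots_def by blast
  then show ?thesis
  proof cases
    case I
    then have "- y = (-s) *\<^sub>R axis i 1 + (-t) *\<^sub>R axis j 1" by simp
    moreover have "-s \<in> {1,-1::real}" "-t \<in> {1,-1::real}" using I by auto
    ultimately show ?thesis using typeI_root[OF I(1)] by metis
  next
    case II
    have "\<forall>i. (-y) $ i \<in> {1,-1}" using II(1) by auto
    moreover have "(\<Prod>i\<in>UNIV. (-y) $ i) = 1"
    proof -
      have "(\<Prod>i\<in>UNIV. (-y) $ i) = (\<Prod>i\<in>UNIV. (-1) * y $ i)" by simp
      also have "\<dots> = (\<Prod>i\<in>(UNIV::8 set). (-1::real)) * (\<Prod>i\<in>UNIV. y $ i)" by (rule prod.distrib)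
      also have "\<dots> = 1" using II(2) by simp
      finally show ?thesis .
    qed
    ultimately show ?thesis using typeII_root by blast
  qed
qed

lemma roots_sign: "y \<in> E8_roots \<Longrightarrow> e \<in> {1,-1::real} \<Longrightarrow> e *\<^sub>R y \<in> E8_roots"
  using roots_neg by auto

lemma roots_nz: assumes "y \<in> E8_roots" shows "y \<noteq> 0"
proof -
  from assms consider (I) i j s t where "i \<noteq> j" "s \<in> {1,-1::real}" "t \<in> {1,-1::real}" "y = s *\<^sub>R axis i 1 + t *\<^sub>R axis j 1"
    | (II) "\<forall>i. y $ i \<in> {1,-1}" "(\<Prod>i\<in>UNIV. y $ i) = 1"
    unfolding E8_roots_def by blast
  then show ?thesis
  proof cases
    case I
    then have "y $ i = s" by (simp add: axis_def)
    then show ?thesis using I(2) by auto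
  next
    case II
    then show ?thesis by (metis insert_iff singletonD zero_index zero_neq_neg_one zero_neq_one)
  qed
qed

lemma R1: assumes y: "y \<in> E8_roots" and M: "M \<in> Pauli3" shows "M *v y \<in> E8_roots"
proof -
  obtain N b e where N: "N \<in> Pauli3" "b < 15" "e \<in> {1,-1::real}" "y = e *\<^sub>R (N *v vecI (Reps!b))"
    using cover[OF y] by blast
  obtain K e' where K: "K \<in> Pauli3" "e' \<in> {1,-1::real}" "M *v (N *v vecI (Reps!b)) = e' *\<^sub>R (K *v vecI (Reps!b))"
    using PP_mult_v[OF M N(1)] by blast
  have "M *v y = e *\<^sub>R (e' *\<^sub>R (K *v vecI (Reps!b)))" using N(4) K(3) by (simp add: mv_scale)
  moreover have "K *v vecI (Reps!b) \<in> E8_roots" using rep_R13[OF N(2) K(1)] by blast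
  moreover have "e * e' \<in> {1,-1::real}" using N(3) K(2) by auto
  ultimately show ?thesis using roots_sign by simp
qed

lemma R3: assumes y: "y \<in> E8_roots" and C: "C \<in> Pauli3"
  shows "vert (C *v y) = vert y \<or> inner y (C *v y) = 0"
proof -
  obtain N b e where N: "N \<in> Pauli3" "b < 15" "e \<in> {1,-1::real}" "y = e *\<^sub>R (N *v vecI (Reps!b))"
    using cover[OF y] by blast
  define y0 where "y0 = vecI (Reps!b)"
  obtain e1 where e1: "e1 \<in> {1,-1::real}" "C *v (N *v y0) = e1 *\<^sub>R (N *v (C *v y0))"
    using PP_comm_v[OF C N(1)] by blast
  have s1: "e * e1 \<in> {1,-1::real}" "- (e * e1) \<in> {1,-1::real}" using e1(1) N(3) by auto
  have Cy: "C *v y = (e * e1) *\<^sub>R (N *v (C *v y0))" using N(4) e1(2) by (simp add: mv_scale y0_def)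
  have "C *v y0 = y0 \<or> C *v y0 = - y0 \<or> inner y0 (C *v y0) = 0"
    using rep_R13[OF N(2) C] y0_def by blast
  then show ?thesis
  proof (elim disjE)
    assume "C *v y0 = y0"
    then have "C *v y = (e * e1) *\<^sub>R (N *v y0)" using Cy by simp
    then have "vert (C *v y) = vert (N *v y0)" using vert_sign[OF s1(1)] by simp
    moreover have "vert y = vert (N *v y0)" using N(4) vert_sign N(3) y0_def by simp
    ultimately show ?thesis by simp
  next
    assume "C *v y0 = - y0"
    then have "C *v y = (- (e * e1)) *\<^sub>R (N *v y0)" using Cy by (simp add: mv_neg)
    then have "vert (C *v y) = vert (N *v y0)" using vert_sign[OF s1(2)] by simp
    moreover have "vert y = vert (N *v y0)" using N(4) vert_sign N(3) y0_def by simp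
    ultimately show ?thesis by simp
  next
    assume 0: "inner y0 (C *v y0) = 0"
    have "inner y (C *v y) = (e * (e * e1)) * inner (N *v y0) (N *v (C *v y0))"
      using N(4) Cy y0_def by (simp add: inner_scaleR_left inner_scaleR_right)
    also have "\<dots> = 0" using PP_inner[OF N(1)] 0 by simp
    finally show ?thesis by simp
  qed
qed

lemma R4: assumes y: "y \<in> E8_roots" shows "span ((\<lambda>M. M *v y) ` Pauli3) = UNIV"
proof -
  obtain N b e where N: "N \<in> Pauli3" "b < 15" "e \<in> {1,-1::real}" "y = e *\<^sub>R (N *v vecI (Reps!b))"
    using cover[OF y] by blast
  define y0 where "y0 = vecI (Reps!b)"
  have Ny0: "N *v y0 = e *\<^sub>R y" using N(3,4) y0_def by auto
  have "M *v y0 \<in> span ((\<lambda>M. M *v y) ` Pauli3)" if M: "M \<in> Pauli3" for M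
  proof -
    have "M *v y0 = M *v (transpose N *v (N *v y0))" using PP_mv_inv[OF N(1)] by simp
    also have "\<dots> = e *\<^sub>R (M *v (transpose N *v y))" using Ny0 by (simp add: mv_scale)
    finally have 1: "M *v y0 = e *\<^sub>R (M *v (transpose N *v y))" .
    obtain e2 where e2: "e2 \<in> {1,-1::real}" "transpose N *v y = e2 *\<^sub>R (N *v y)" using PP_trans_v[OF N(1)] by blast
    obtain K e3 where K: "K \<in> Pauli3" "e3 \<in> {1,-1::real}" "M *v (N *v y) = e3 *\<^sub>R (K *v y)"
      using PP_mult_v[OF M N(1)] by blast
    have "M *v y0 = (e * e2 * e3) *\<^sub>R (K *v y)" using 1 e2(2) K(3) by (simp add: mv_scale)
    moreover have "K *v y \<in> span ((\<lambda>M. M *v y) ` Pauli3)" using K(1) by (simp add: span_base)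
    ultimately show ?thesis by (simp add: span_mul)
  qed
  then have "(\<lambda>M. M *v y0) ` Pauli3 \<subseteq> span ((\<lambda>M. M *v y) ` Pauli3)" by blast
  then have "span ((\<lambda>M. M *v y0) ` Pauli3) \<subseteq> span ((\<lambda>M. M *v y) ` Pauli3)"
    by (simp add: span_minimal)
  then show ?thesis using rep_span[OF N(2)] y0_def by auto
qed




definition projR :: "real^8 \<Rightarrow> real^8^8" where
  "projR x = (\<chi> i j. x $ i * x $ j / (norm x)^2)"

lemma projR_mv: "projR x *v v = (inner x v / (norm x)^2) *\<^sub>R x"
proof -
  have "(\<Sum>j\<in>UNIV. x $ i * x $ j / (norm x)^2 * v $ j) = (\<Sum>j\<in>UNIV. x $ j * v $ j) / (norm x)^2 * x $ i" for i
    by (simp add: sum_divide_distrib sum_distrib_right sum_distrib_left ac_simps)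
  then show ?thesis by (simp add: vec_eq_iff matrix_vector_mult_def projR_def inner_vec_def)
qed

lemma sum_mv: "(\<Sum>k\<in>Ob. (F k::real^8^8)) *v v = (\<Sum>k\<in>Ob. F k *v v)"
proof -
  have "(\<Sum>j\<in>UNIV. (\<Sum>k\<in>Ob. F k $ i $ j) * v $ j) = (\<Sum>k\<in>Ob. \<Sum>j\<in>UNIV. F k $ i $ j * v $ j)" for i
    by (simp add: sum_distrib_right sum.swap[of _ Ob])
  then show ?thesis by (simp add: vec_eq_iff matrix_vector_mult_def sum_component)
qed

lemma GL:
  fixes f :: "'k \<Rightarrow> real^8"
  assumes fin: "finite Ob" and nz: "\<forall>k\<in>Ob. f k \<noteq> 0"
    and orth: "\<forall>k\<in>Ob. \<forall>k'\<in>Ob. k \<noteq> k' \<longrightarrow> inner (f k) (f k') = 0"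
    and sp: "span (f ` Ob) = UNIV"
  shows "(\<Sum>k\<in>Ob. projR (f k)) = mat 1"
proof -
  have "(\<Sum>k\<in>Ob. projR (f k)) *v v = mat 1 *v v" for v
  proof -
    define c where "c k = inner (f k) v / (norm (f k))^2" for k
    define r where "r = v - (\<Sum>k\<in>Ob. c k *\<^sub>R f k)"
    have sv: "(\<Sum>k\<in>Ob. projR (f k)) *v v = (\<Sum>k\<in>Ob. c k *\<^sub>R f k)"
      by (simp add: sum_mv projR_mv c_def)
    have o: "orthogonal r (f j)" if j: "j \<in> Ob" for j
    proof -
      have "inner (\<Sum>k\<in>Ob. c k *\<^sub>R f k) (f j) = (\<Sum>k\<in>Ob. c k * inner (f k) (f j))"
        by (simp add: inner_sum_left)
      also have "\<dots> = (\<Sum>k\<in>Ob. if k = j then c j * inner (f j) (f j) else 0)"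
        by (rule sum.cong) (use orth j in auto)
      also have "\<dots> = c j * inner (f j) (f j)" using fin j by simp
      also have "\<dots> = inner (f j) v"
        using nz j by (simp add: c_def power2_norm_eq_inner[symmetric])
      finally have "inner (\<Sum>k\<in>Ob. c k *\<^sub>R f k) (f j) = inner (f j) v" .
      then have "inner r (f j) = inner v (f j) - inner (f j) v" by (simp add: r_def inner_diff_left)
      then show ?thesis by (simp add: orthogonal_def inner_commute)
    qed
    have "orthogonal r r"
      by (rule orthogonal_to_span[of r "f ` Ob" r]) (use sp o in auto)
    then have "r = 0" by (simp add: orthogonal_def)
    then show ?thesis using sv by (simp add: r_def)
  qed
  then show ?thesis by (simp add: matrix_eq)
qed

lemma projC_R: "projC x = (\<chi> i j. complex_of_real (projR x $ i $ j))"
  by (simp add: projC_def projR_def)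

lemma GLC:
  fixes f :: "'k \<Rightarrow> real^8"
  assumes "finite Ob" "\<forall>k\<in>Ob. f k \<noteq> 0"
    "\<forall>k\<in>Ob. \<forall>k'\<in>Ob. k \<noteq> k' \<longrightarrow> inner (f k) (f k') = 0"
    "span (f ` Ob) = UNIV"
  shows "(\<Sum>k\<in>Ob. projC (f k)) = mat 1"
proof -
  have R: "(\<Sum>k\<in>Ob. projR (f k)) = mat 1" by (rule GL[OF assms])
  have "(\<Sum>k\<in>Ob. projC (f k)) $ i $ j = complex_of_real ((\<Sum>k\<in>Ob. projR (f k)) $ i $ j)" for i j
    by (simp add: projC_R sum_component)
  then show ?thesis unfolding R by (simp add: vec_eq_iff mat_def)
qed

lemma is_projection_projC: "is_projection (projC x)"
proof -
  have a: "adjointC (projC x) = projC x"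
    by (simp add: vec_eq_iff adjointC_def projC_def mult.commute)
  define n where "n = (norm x)^2"
  have n: "(\<Sum>k\<in>UNIV. x $ k * x $ k) = n" by (simp add: n_def power2_norm_eq_inner inner_vec_def)
  have e: "(\<Sum>k\<in>UNIV. x $ i * x $ k / n * (x $ k * x $ j / n)) = x $ i * x $ j / n" for i j
  proof -
    have "(\<Sum>k\<in>UNIV. x $ i * x $ k / n * (x $ k * x $ j / n)) = x $ i * x $ j * (\<Sum>k\<in>UNIV. x $ k * x $ k) / (n * n)"
      by (simp add: sum_divide_distrib sum_distrib_left ac_simps)
    also have "\<dots> = x $ i * x $ j / n" unfolding n by (cases "n = 0") simp_all
    finally show ?thesis .
  qed
  have "(projC x ** projC x) $ i $ j = projC x $ i $ j" for i j
  proof -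
    have "(projC x ** projC x) $ i $ j = (\<Sum>k\<in>UNIV. complex_of_real (x$i*x$k/n) * complex_of_real (x$k*x$j/n))"
      by (simp only: matrix_matrix_mult_def projC_def vec_lambda_beta n_def[symmetric])
    also have "\<dots> = complex_of_real (\<Sum>k\<in>UNIV. x$i*x$k/n * (x$k*x$j/n))"
      by (simp only: of_real_mult[symmetric] of_real_sum[symmetric])
    also have "\<dots> = complex_of_real (x$i*x$j/n)" by (simp only: e)
    also have "\<dots> = projC x $ i $ j" by (simp only: projC_def vec_lambda_beta n_def)
    finally show ?thesis .
  qed
  then have b: "projC x ** projC x = projC x" by (simp add: vec_eq_iff)
  show ?thesis using a b by (simp add: is_projection_def)
qed

lemma is_projection_0: "is_projection (0::complex^8^8)"
  by (simp add: is_projection_def adjointC_def vec_eq_iff matrix_matrix_mult_def)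




lemma finite_orbit: "finite (L_orbit (vert w))"
  unfolding L_orbit_vert using finite_PP by simp

lemma MAIN_SUM:
  fixes B :: "(real^8) set \<Rightarrow> real^8^8"
  assumes w: "w \<in> E8_roots" and Ob: "Ob = L_orbit (vert w)" and BP: "\<forall>k\<in>Ob. B k \<in> Pauli3"
    and inj: "\<forall>k\<in>Ob. \<forall>k'\<in>Ob. vert (B k *v w) = vert (B k' *v w) \<longrightarrow> k = k'"
  shows "(\<Sum>k\<in>Ob. projC (B k *v w)) = mat 1"
proof -
  have fin: "finite Ob" using Ob finite_orbit by simp
  define g where "g k = vert (B k *v w)" for k
  have gO: "g ` Ob \<subseteq> Ob" unfolding Ob g_def L_orbit_vert using BP Ob L_orbit_vert by auto
  have ginj: "inj_on g Ob" using inj unfolding g_def inj_on_def by blast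
  have gsurj: "g ` Ob = Ob" using endo_inj_surj[OF fin gO ginj] .
  have wnz: "w \<noteq> 0" using roots_nz[OF w] .
  have nz: "\<forall>k\<in>Ob. B k *v w \<noteq> 0"
  proof
    fix k assume k: "k \<in> Ob"
    have "inner (B k *v w) (B k *v w) = inner w w" using PP_inner BP k by blast
    then show "B k *v w \<noteq> 0" using wnz by auto
  qed
  have orth: "\<forall>k\<in>Ob. \<forall>k'\<in>Ob. k \<noteq> k' \<longrightarrow> inner (B k *v w) (B k' *v w) = 0"
  proof (intro ballI impI)
    fix k k' assume k: "k \<in> Ob" "k' \<in> Ob" "k \<noteq> k'"
    have Bk: "B k \<in> Pauli3" "B k' \<in> Pauli3" using BP k by auto
    define z where "z = transpose (B k) *v (B k' *v w)"
    have Bz: "B k *v z = B k' *v w" unfolding z_def by (rule PP_mv_inv2[OF Bk(1)])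
    obtain e2 where e2: "e2 \<in> {1,-1::real}" "transpose (B k) *v (B k' *v w) = e2 *\<^sub>R (B k *v (B k' *v w))"
      using PP_trans_v[OF Bk(1)] by blast
    obtain K e3 where K: "K \<in> Pauli3" "e3 \<in> {1,-1::real}" "B k *v (B k' *v w) = e3 *\<^sub>R (K *v w)"
      using PP_mult_v[OF Bk] by blast
    have z: "z = (e2 * e3) *\<^sub>R (K *v w)" using e2(2) K(3) unfolding z_def by simp
    have s: "e2 * e3 \<in> {1,-1::real}" using e2(1) K(2) by auto
    have "inner (B k *v w) (B k' *v w) = inner w z" using PP_inner[OF Bk(1), of w z] Bz by simp
    moreover have "inner w z = 0"
    proof -
      from R3[OF w K(1)] show ?thesis
      proof
        assume "vert (K *v w) = vert w"
        then have "vert z = vert w" using z vert_sign[OF s] by simp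
        then have "vert (B k *v z) = vert (B k *v w)" by (rule vert_mv)
        then have "vert (B k' *v w) = vert (B k *v w)" using Bz by simp
        then have "k' = k" using inj k by blast
        then show ?thesis using k(3) by simp
      next
        assume "inner w (K *v w) = 0"
        then show ?thesis using z by (simp add: inner_scaleR_right)
      qed
    qed
    ultimately show "inner (B k *v w) (B k' *v w) = 0" by simp
  qed
  have sp: "span ((\<lambda>k. B k *v w) ` Ob) = UNIV"
  proof -
    have "M *v w \<in> span ((\<lambda>k. B k *v w) ` Ob)" if M: "M \<in> Pauli3" for M
    proof -
      have "vert (M *v w) \<in> Ob" unfolding Ob L_orbit_vert using M by blast
      then obtain k where k: "k \<in> Ob" "vert (M *v w) = g k" using gsurj by (metis imageE)
      then have "M *v w = B k *v w \<or> M *v w = - (B k *v w)" unfolding g_def by (simp add: vert_eq)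
      moreover have "B k *v w \<in> span ((\<lambda>k. B k *v w) ` Ob)" using k(1) by (simp add: span_base)
      ultimately show ?thesis by (metis span_neg)
    qed
    then have "(\<lambda>M. M *v w) ` Pauli3 \<subseteq> span ((\<lambda>k. B k *v w) ` Ob)" by blast
    then have "span ((\<lambda>M. M *v w) ` Pauli3) \<subseteq> span ((\<lambda>k. B k *v w) ` Ob)" by (simp add: span_minimal)
    then show ?thesis using R4[OF w] by auto
  qed
  show ?thesis by (rule GLC[OF fin nz orth sp])
qed


lemma finite_vertices: "finite E8_vertices"
  unfolding E8_vertices_def using finite_roots by simp

lemma orbit_sub: assumes "y \<in> E8_roots" shows "L_orbit (vert y) \<subseteq> E8_vertices"
  unfolding L_orbit_vert E8_vertices_def using R1[OF assms] by blast

lemma orbit_rep: "k \<in> L_orbit (vert y) \<Longrightarrow> \<exists>A\<in>Pauli3. k = vert (A *v y)"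
  unfolding L_orbit_vert by blast

theorem lemma3p5:
  fixes w :: "(real^8) set set \<Rightarrow> real^8"
    and Mc :: "(real^8) set \<Rightarrow> (real^8) set \<Rightarrow> real^8^8"
    and u :: "(real^8) set \<Rightarrow> (real^8) set \<Rightarrow> complex^8^8"
  assumes w_choice: "\<And>Vi. Vi \<in> L_orbits \<Longrightarrow> w Vi \<in> E8_roots \<and> vert (w Vi) \<in> Vi"
    and M_choice: "\<And>y z. y \<in> E8_roots \<Longrightarrow> z \<in> E8_roots \<Longrightarrow> vert z \<in> L_orbit (vert y) \<Longrightarrow>
          Mc (vert y) (vert z) \<in> Pauli3 \<and>
          (Mc (vert y) (vert z) *v y = z \<or> Mc (vert y) (vert z) *v y = - z)"
    and u_def: "\<And>v v'. u v v' =
          (if v' \<in> L_orbit v then projC (Mc v v' *v w (L_orbit v)) else 0)"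
  shows "quantum_permutation_matrix E8_vertices u"
proof -
  have proj: "is_projection (u v v')" for v v'
    using is_projection_projC is_projection_0 by (simp add: u_def)
  have M_vert: "Mc (vert y) (vert z) \<in> Pauli3 \<and> vert (Mc (vert y) (vert z) *v y) = vert z"
    if "y \<in> E8_roots" "z \<in> E8_roots" "vert z \<in> L_orbit (vert y)" for y z
    using M_choice[OF that] by (auto simp: vert_eq)
  have wO: "w (L_orbit (vert y)) \<in> E8_roots \<and> L_orbit (vert (w (L_orbit (vert y)))) = L_orbit (vert y)
      \<and> (\<exists>A\<in>Pauli3. vert (w (L_orbit (vert y))) = vert (A *v y))"
    if y: "y \<in> E8_roots" for y
  proof -
    have "L_orbit (vert y) \<in> L_orbits" unfolding L_orbits_def E8_vertices_def using y by blast
    then have 1: "w (L_orbit (vert y)) \<in> E8_roots" "vert (w (L_orbit (vert y))) \<in> L_orbit (vert y)"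
      using w_choice by auto
    show ?thesis using 1 L_sub[OF 1(2)] orbit_rep[OF 1(2)] by blast
  qed
  have row: "(\<Sum>k\<in>E8_vertices. u v k) = mat 1" if v: "v \<in> E8_vertices" for v
  proof -
    obtain y where y: "y \<in> E8_roots" "v = vert y" using v unfolding E8_vertices_def by blast
    define Ob where "Ob = L_orbit v"
    define wv where "wv = w Ob"
    have Osub: "Ob \<subseteq> E8_vertices" using orbit_sub[OF y(1)] y(2) Ob_def by simp
    obtain A where A: "A \<in> Pauli3" "vert wv = vert (A *v y)" using wO[OF y(1)] y(2) Ob_def wv_def by blast
    have wv: "wv \<in> E8_roots" "Ob = L_orbit (vert wv)" using wO[OF y(1)] y(2) Ob_def wv_def by auto
    have "(\<Sum>k\<in>E8_vertices. u v k) = (\<Sum>k\<in>E8_vertices. if k \<in> Ob then projC (Mc v k *v wv) else 0)"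
      unfolding wv_def Ob_def by (simp add: u_def)
    also have "\<dots> = (\<Sum>k\<in>Ob. projC (Mc v k *v wv))"
      using sum.inter_restrict[OF finite_vertices, of "\<lambda>k. projC (Mc v k *v wv)" Ob] Osub
      by (simp add: Int_absorb1)
    also have "\<dots> = mat 1"
    proof (rule MAIN_SUM[OF wv])
      have Bk: "Mc v k \<in> Pauli3 \<and> vert (Mc v k *v y) = k" if k: "k \<in> Ob" for k
      proof -
        obtain z where z: "z \<in> E8_roots" "k = vert z" using Osub k unfolding E8_vertices_def by blast
        show ?thesis using M_vert[OF y(1) z(1)] k z(2) y(2) Ob_def by simp
      qed
      then show "\<forall>k\<in>Ob. Mc v k \<in> Pauli3" by blast
      show "\<forall>k\<in>Ob. \<forall>k'\<in>Ob. vert (Mc v k *v wv) = vert (Mc v k' *v wv) \<longrightarrow> k = k'"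
      proof (intro ballI impI)
        fix k k' assume k: "k \<in> Ob" "k' \<in> Ob" and eq: "vert (Mc v k *v wv) = vert (Mc v k' *v wv)"
        have e: "vert (Mc v j *v wv) = vert (A *v j')" if "j \<in> Ob" "vert j' = j" for j j'
        proof -
          have B: "Mc v j \<in> Pauli3" "vert (Mc v j *v y) = j" using Bk[OF that(1)] by auto
          have "vert (Mc v j *v wv) = vert (Mc v j *v (A *v y))" using A(2) by (rule vert_mv)
          also have "\<dots> = vert (A *v (Mc v j *v y))" using PP_comm_mv[OF B(1) A(1)] .
          also have "\<dots> = vert (A *v j')"
          proof (rule vert_mv)
            show "vert (Mc v j *v y) = vert j'" using B(2) that(2) by simp
          qed
          finally show ?thesis .
        qed
        obtain z where z: "z \<in> E8_roots" "k = vert z" using Osub k(1) unfolding E8_vertices_def by blast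
        obtain z' where z': "z' \<in> E8_roots" "k' = vert z'" using Osub k(2) unfolding E8_vertices_def by blast
        have e1: "vert (Mc v k *v wv) = vert (A *v z)" using e[OF k(1)] z(2) by simp
        have e2: "vert (Mc v k' *v wv) = vert (A *v z')" using e[OF k(2)] z'(2) by simp
        have "vert (A *v z) = vert (A *v z')" using e1 e2 eq by simp
        then have "vert z = vert z'" by (rule vert_mv_inv[OF A(1)])
        then show "k = k'" using z(2) z'(2) by simp
      qed
    qed
    finally show ?thesis .
  qed
  have col: "(\<Sum>k\<in>E8_vertices. u k v) = mat 1" if v: "v \<in> E8_vertices" for v
  proof -
    obtain z where z: "z \<in> E8_roots" "v = vert z" using v unfolding E8_vertices_def by blast
    define Ob where "Ob = L_orbit v"
    define wv where "wv = w Ob"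
    have Osub: "Ob \<subseteq> E8_vertices" using orbit_sub[OF z(1)] z(2) Ob_def by simp
    obtain A where A: "A \<in> Pauli3" "vert wv = vert (A *v z)" using wO[OF z(1)] z(2) Ob_def wv_def by blast
    have wv: "wv \<in> E8_roots" "Ob = L_orbit (vert wv)" using wO[OF z(1)] z(2) Ob_def wv_def by auto
    have sym: "(v \<in> L_orbit k \<longleftrightarrow> k \<in> Ob) \<and> (k \<in> Ob \<longrightarrow> L_orbit k = Ob)" if k: "k \<in> E8_vertices" for k
    proof -
      obtain y where y: "y \<in> E8_roots" "k = vert y" using k unfolding E8_vertices_def by blast
      have "k \<in> Ob" if h: "v \<in> L_orbit k"
      proof -
        have "L_orbit v = L_orbit (vert y)" using L_sub h y(2) by blast
        then show ?thesis using L_self[of y] y(2) Ob_def by simp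
      qed
      moreover have "L_orbit k = Ob \<and> v \<in> L_orbit k" if h: "k \<in> Ob"
      proof -
        have "L_orbit k = L_orbit (vert z)" using L_sub h z(2) Ob_def by blast
        then show ?thesis using L_self[of z] z(2) Ob_def by simp
      qed
      ultimately show ?thesis by blast
    qed
    have "(\<Sum>k\<in>E8_vertices. u k v) = (\<Sum>k\<in>E8_vertices. if k \<in> Ob then projC (Mc k v *v wv) else 0)"
    proof (rule sum.cong[OF refl])
      fix k assume k: "k \<in> E8_vertices"
      show "u k v = (if k \<in> Ob then projC (Mc k v *v wv) else 0)"
        using sym[OF k] by (simp add: u_def wv_def)
    qed
    also have "\<dots> = (\<Sum>k\<in>Ob. projC (Mc k v *v wv))"
      using sum.inter_restrict[OF finite_vertices, of "\<lambda>k. projC (Mc k v *v wv)" Ob] Osub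
      by (simp add: Int_absorb1)
    also have "\<dots> = mat 1"
    proof (rule MAIN_SUM[OF wv])
      have Bk: "Mc k v \<in> Pauli3 \<and> vert (Mc k v *v y) = v" if k: "k \<in> Ob" "y \<in> E8_roots" "k = vert y" for k y
      proof -
        have "v \<in> L_orbit k" using sym Osub k(1) by blast
        then show ?thesis using M_vert[OF k(2) z(1)] k(3) z(2) by simp
      qed
      show "\<forall>k\<in>Ob. Mc k v \<in> Pauli3"
        using Bk Osub unfolding E8_vertices_def by blast
      show "\<forall>k\<in>Ob. \<forall>k'\<in>Ob. vert (Mc k v *v wv) = vert (Mc k' v *v wv) \<longrightarrow> k = k'"
      proof (intro ballI impI)
        fix k k' assume k: "k \<in> Ob" "k' \<in> Ob" and eq: "vert (Mc k v *v wv) = vert (Mc k' v *v wv)"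
        have e: "vert (Mc j v *v wv) = vert (A *v (Mc j v *v z)) \<and> vert y = vert (Mc j v *v z)"
          if "j \<in> Ob" "y \<in> E8_roots" "j = vert y" for j y
        proof -
          have B: "Mc j v \<in> Pauli3" "vert (Mc j v *v y) = vert z" using Bk[OF that] z(2) by auto
          have "vert (Mc j v *v wv) = vert (Mc j v *v (A *v z))" using A(2) by (rule vert_mv)
          also have "\<dots> = vert (A *v (Mc j v *v z))" using PP_comm_mv[OF B(1) A(1)] .
          finally have 1: "vert (Mc j v *v wv) = vert (A *v (Mc j v *v z))" .
          have "vert (transpose (Mc j v) *v (Mc j v *v y)) = vert (transpose (Mc j v) *v z)"
            using B(2) by (rule vert_mv)
          then have "vert y = vert (transpose (Mc j v) *v z)" using PP_mv_inv[OF B(1)] by simp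
          also have "\<dots> = vert (Mc j v *v z)" using PP_trans_mv[OF B(1)] .
          finally show ?thesis using 1 by simp
        qed
        obtain y where y: "y \<in> E8_roots" "k = vert y" using Osub k(1) unfolding E8_vertices_def by blast
        obtain y' where y': "y' \<in> E8_roots" "k' = vert y'" using Osub k(2) unfolding E8_vertices_def by blast
        have "vert (A *v (Mc k v *v z)) = vert (A *v (Mc k' v *v z))"
          using e[OF k(1) y] e[OF k(2) y'] eq by simp
        then have m: "vert (Mc k v *v z) = vert (Mc k' v *v z)" by (rule vert_mv_inv[OF A(1)])
        have a: "k = vert (Mc k v *v z)" using trans[OF y(2) conjunct2[OF e[OF k(1) y]]] .
        have b: "k' = vert (Mc k' v *v z)" using trans[OF y'(2) conjunct2[OF e[OF k(2) y']]] .
        show "k = k'" using trans[OF trans[OF a m] b[symmetric]] .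
      qed
    qed
    finally show ?thesis .
  qed
  show ?thesis unfolding quantum_permutation_matrix_def using proj row col by blast
qed


end
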